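(* Let $s\in(0,\infty)$, $r\in\mathbb N$ with $r>s$, $y,y'\in(0,1]$ and $x,x'\in\mathbb R^n$; if $s\ge1$ assume additionally $|x-x'|\le\max\{y,y'\}$. Then there is a constant $C$, depending only on $r$ (and $s,n$), such that for every $f\in\Lambda_s$, $$|\Delta_rf(x,y)-\Delta_rf(x',y')|\le C\|f\|_{\Lambda_s}\times\begin{cases}|x-x'|^s+|y-y'|^s,& s\in(0,1),\\ |x-x'|\log\big(e+\frac{y+y'}{|x-x'|}\big)+|y-y'|\log\big(e+\frac{y+y'}{|y-y'|}\big),& s=1,\\ (y+y')^{s-1}(|y-y'|+|x-x'|),& s\in(1,\infty),\end{cases}$$ where a term of the form $t\log(e+a/t)$ is interpreted as $0$ when $t=0$.
   Context: $\Delta_hf(x):=f(x+h/2)-f(x-h/2)$, $\Delta^{k+1}_h:=\Delta^k_h\Delta_h$, $\Delta_kf(x,y):=\sup_{h\in\mathbb R^n,|h|=y}|\Delta_h^kf(x)|$. $\Lambda_s$: the space of bounded continuous $f$ on $\mathbb R^n$ with $\|f\|_{\Lambda_s}:=\|f\|_{L^\infty}+\sup_{x\in\mathbb R^n,y\in(0,1]}\Delta_{\lfloor s\rfloor+1}f(x,y)/y^s<\infty$. *)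

theory Defs
  imports "HOL-Analysis.Analysis"
begin

definition sdiff :: "'a::real_normed_vector \<Rightarrow> ('a \<Rightarrow> real) \<Rightarrow> 'a \<Rightarrow> real" where
  "sdiff h f x = f (x + (1/2) *\<^sub>R h) - f (x - (1/2) *\<^sub>R h)"

fun sdiff_pow :: "nat \<Rightarrow> 'a::real_normed_vector \<Rightarrow> ('a \<Rightarrow> real) \<Rightarrow> 'a \<Rightarrow> real" where
  "sdiff_pow 0 h f = f"
| "sdiff_pow (Suc k) h f = sdiff_pow k h (sdiff h f)"

definition Delta_k :: "nat \<Rightarrow> ('a::real_normed_vector \<Rightarrow> real) \<Rightarrow> 'a \<Rightarrow> real \<Rightarrow> real" where
  "Delta_k k f x y = (SUP h\<in>{h. norm h = y}. \<bar>sdiff_pow k h f x\<bar>)"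

definition holder_seminorm_set :: "real \<Rightarrow> ('a::real_normed_vector \<Rightarrow> real) \<Rightarrow> real set" where
  "holder_seminorm_set s f =
     {Delta_k (nat \<lfloor>s\<rfloor> + 1) f x y / y powr s | x y. 0 < y \<and> y \<le> 1}"

definition Lambda_space :: "real \<Rightarrow> ('a::real_normed_vector \<Rightarrow> real) set" where
  "Lambda_space s = {f. continuous_on UNIV f \<and> bounded (range f)
                        \<and> bdd_above (holder_seminorm_set s f)}"

definition Lambda_norm :: "real \<Rightarrow> ('a::real_normed_vector \<Rightarrow> real) \<Rightarrow> real" where
  "Lambda_norm s f = (SUP x. \<bar>f x\<bar>) + Sup (holder_seminorm_set s f)"

definition tlog :: "real \<Rightarrow> real \<Rightarrow> real" where
  "tlog t a = (if t = 0 then 0 else t * ln (exp 1 + a / t))"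

definition modulus_bound :: "real \<Rightarrow> real \<Rightarrow> real \<Rightarrow> real \<Rightarrow> real" where
  "modulus_bound s dx y y' = (let dy = \<bar>y - y'\<bar> in
     if s < 1 then dx powr s + dy powr s
     else if s = 1 then tlog dx (y + y') + tlog dy (y + y')
     else (y + y') powr (s - 1) * (dy + dx))"

end

theory Submission
  imports Defs
begin


fun fd :: "nat \<Rightarrow> real \<Rightarrow> (real \<Rightarrow> real) \<Rightarrow> real \<Rightarrow> real" where
  "fd 0 \<tau> w t = w t"
| "fd (Suc j) \<tau> w t = fd j \<tau> w (t + \<tau>) - fd j \<tau> w t"

lemma fd_add: "fd (i + j) \<tau> w t = fd i \<tau> (fd j \<tau> w) t"
  by (induction i arbitrary: t) auto

lemma fd_diff: "fd i \<tau> (\<lambda>u. g u - h u) t = fd i \<tau> g t - fd i \<tau> h t"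
  by (induction i arbitrary: t) auto

lemma fd_bound:
  assumes "\<And>l. l \<le> i \<Longrightarrow> \<bar>w (t + real l * \<tau>)\<bar> \<le> D"
  shows "\<bar>fd i \<tau> w t\<bar> \<le> 2 ^ i * D"
  using assms
proof (induction i arbitrary: t)
  case 0 then show ?case using "0.prems"[of 0] by simp
next
  case (Suc i)
  have a: "\<bar>fd i \<tau> w (t + \<tau>)\<bar> \<le> 2 ^ i * D"
  proof (rule Suc.IH)
    fix l assume "l \<le> i"
    then have "\<bar>w (t + real (Suc l) * \<tau>)\<bar> \<le> D" using Suc.prems[of "Suc l"] by simp
    moreover have "t + \<tau> + real l * \<tau> = t + real (Suc l) * \<tau>" by (simp add: algebra_simps)
    ultimately show "\<bar>w (t + \<tau> + real l * \<tau>)\<bar> \<le> D" by metis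
  qed
  have b: "\<bar>fd i \<tau> w t\<bar> \<le> 2 ^ i * D"
    by (rule Suc.IH) (use Suc.prems in auto)
  show ?case using a b by simp
qed

lemma fd_commute:
  "fd j a (\<lambda>t. fd i b (F t) u) t0 = fd i b (\<lambda>u. fd j a (\<lambda>t. F t u) t0) u"
proof (induction j arbitrary: t0)
  case 0 then show ?case by simp
next
  case (Suc j)
  show ?case by (simp add: Suc.IH fd_diff[symmetric])
qed

lemma fd_affine: "fd j \<tau> (\<lambda>u. w (\<alpha> + \<beta> * u)) t = fd j (\<beta> * \<tau>) w (\<alpha> + \<beta> * t)"
proof (induction j arbitrary: t)
  case 0 then show ?case by simp
next
  case (Suc j)
  have "\<alpha> + \<beta> * (t + \<tau>) = \<alpha> + \<beta> * t + \<beta> * \<tau>" by (simp add: algebra_simps)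
  then show ?case by (simp add: Suc.IH add.assoc)
qed

lemma fd_cmult: "fd j \<tau> (\<lambda>u. c * w u) t = c * fd j \<tau> w t"
  by (induction j arbitrary: t) (auto simp: algebra_simps)

lemma fd_const: "fd j \<tau> (\<lambda>u. c) t = (if j = 0 then c else 0)"
  by (induction j arbitrary: t) auto

lemma sdiff_pow_fd:
  "sdiff_pow k h f x = fd k 1 (\<lambda>t. f (x + (t - real k / 2) *\<^sub>R h)) 0"
proof (induction k arbitrary: f)
  case 0 then show ?case by simp
next
  case (Suc k)
  have "sdiff_pow (Suc k) h f x = fd k 1 (\<lambda>t. sdiff h f (x + (t - real k / 2) *\<^sub>R h)) 0"
    by (simp add: Suc.IH)
  also have "(\<lambda>t. sdiff h f (x + (t - real k / 2) *\<^sub>R h)) =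
     fd 1 1 (\<lambda>t. f (x + (t - real (Suc k) / 2) *\<^sub>R h))"
  proof
    fix t
    have r1: "t - real k / 2 + 1/2 = t + 1 - real (Suc k) / 2" by (simp add: field_simps)
    have r2: "t - real k / 2 - 1/2 = t - real (Suc k) / 2" by (simp add: field_simps)
    have e1: "x + (t - real k / 2) *\<^sub>R h + (1/2) *\<^sub>R h = x + (t + 1 - real (Suc k) / 2) *\<^sub>R h"
      unfolding r1[symmetric] add.assoc scaleR_left_distrib ..
    have e2: "x + (t - real k / 2) *\<^sub>R h - (1/2) *\<^sub>R h = x + (t - real (Suc k) / 2) *\<^sub>R h"
      unfolding r2[symmetric] scaleR_diff_left by (simp add: algebra_simps)
    show "sdiff h f (x + (t - real k / 2) *\<^sub>R h) = fd 1 1 (\<lambda>t. f (x + (t - real (Suc k) / 2) *\<^sub>R h)) t"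
      unfolding sdiff_def by (simp only: One_nat_def fd.simps e1 e2)
  qed
  also have "fd k 1 (fd 1 1 (\<lambda>t. f (x + (t - real (Suc k) / 2) *\<^sub>R h))) 0 = fd (Suc k) 1 (\<lambda>t. f (x + (t - real (Suc k) / 2) *\<^sub>R h)) 0"
    using fd_add[of k 1, symmetric] by simp
  finally show ?case .
qed




definition avg :: "real \<Rightarrow> (real \<Rightarrow> real) \<Rightarrow> real \<Rightarrow> real" where
  "avg \<tau> g u = g (u + \<tau>) + g u"

lemma fd_add_fun: "fd i \<tau> (\<lambda>u. g u + h u) t = fd i \<tau> g t + fd i \<tau> h t"
  by (induction i arbitrary: t) auto

lemma fd_shift: "fd i \<tau> (\<lambda>u. g (u + c)) t = fd i \<tau> g (t + c)"
  by (induction i arbitrary: t) (auto simp: ac_simps)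

lemma fd_avg: "fd i \<tau> (avg \<tau> g) = avg \<tau> (fd i \<tau> g)"
proof
  fix t
  have "avg \<tau> g = (\<lambda>u. g (u + \<tau>) + g u)" by (rule ext) (simp add: avg_def)
  then show "fd i \<tau> (avg \<tau> g) t = avg \<tau> (fd i \<tau> g) t"
    by (simp add: fd_add_fun fd_shift avg_def)
qed

lemma fd_Suc': "fd (Suc j) \<tau> w = fd j \<tau> (fd 1 \<tau> w)"
  using fd_add[of j 1] by (auto simp: fun_eq_iff)

lemma fd_double: "fd j (2*\<tau>) w = (avg \<tau> ^^ j) (fd j \<tau> w)"
proof (induction j arbitrary: w)
  case 0 then show ?case by (simp add: fun_eq_iff)
next
  case (Suc j)
  have e1: "fd 1 (2*\<tau>) w = avg \<tau> (fd 1 \<tau> w)"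
  proof
    fix t
    have "t + 2 * \<tau> = t + \<tau> + \<tau>" by simp
    then show "fd 1 (2*\<tau>) w t = avg \<tau> (fd 1 \<tau> w) t" by (simp add: avg_def ac_simps)
  qed
  have "fd (Suc j) (2*\<tau>) w = fd j (2*\<tau>) (avg \<tau> (fd 1 \<tau> w))"
    by (simp only: fd_Suc' e1)
  also have "\<dots> = (avg \<tau> ^^ j) (fd j \<tau> (avg \<tau> (fd 1 \<tau> w)))" by (rule Suc.IH)
  also have "\<dots> = (avg \<tau> ^^ j) (avg \<tau> (fd j \<tau> (fd 1 \<tau> w)))" by (simp only: fd_avg)
  also have "\<dots> = (avg \<tau> ^^ Suc j) (fd (Suc j) \<tau> w)"
    by (simp only: funpow_Suc_right fd_Suc' comp_apply)
  finally show ?case .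
qed

lemma avg_pow_bound:
  assumes "\<And>l. l < j \<Longrightarrow> \<bar>fd 1 \<tau> g (t + real l * \<tau>)\<bar> \<le> D"
  shows "\<bar>(avg \<tau> ^^ j) g t - 2^j * g t\<bar> \<le> real j * 2^j / 2 * D"
  using assms
proof (induction j arbitrary: t)
  case 0 then show ?case by simp
next
  case (Suc j)
  have i1: "\<bar>(avg \<tau> ^^ j) g (t + \<tau>) - 2^j * g (t + \<tau>)\<bar> \<le> real j * 2^j / 2 * D"
  proof (rule Suc.IH)
    fix l assume "l < j"
    then have "\<bar>fd 1 \<tau> g (t + real (Suc l) * \<tau>)\<bar> \<le> D" using Suc.prems[of "Suc l"] by simp
    moreover have "t + \<tau> + real l * \<tau> = t + real (Suc l) * \<tau>" by (simp add: algebra_simps)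
    ultimately show "\<bar>fd 1 \<tau> g (t + \<tau> + real l * \<tau>)\<bar> \<le> D" by metis
  qed
  have i2: "\<bar>(avg \<tau> ^^ j) g t - 2^j * g t\<bar> \<le> real j * 2^j / 2 * D"
    by (rule Suc.IH) (use Suc.prems in auto)
  have i3: "\<bar>fd 1 \<tau> g t\<bar> \<le> D" using Suc.prems[of 0] by simp
  have s1: "(avg \<tau> ^^ Suc j) g t = (avg \<tau> ^^ j) g (t + \<tau>) + (avg \<tau> ^^ j) g t"
    by (simp add: avg_def)
  have s2: "fd 1 \<tau> g t = g (t + \<tau>) - g t" by simp
  have eq: "(avg \<tau> ^^ Suc j) g t - 2^Suc j * g t =
     ((avg \<tau> ^^ j) g (t + \<tau>) - 2^j * g (t + \<tau>)) + ((avg \<tau> ^^ j) g t - 2^j * g t)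
     + 2^j * fd 1 \<tau> g t"
    unfolding s1 s2 by (simp add: algebra_simps)
  have i4: "\<bar>2^j * fd 1 \<tau> g t\<bar> \<le> 2^j * D" using i3 by (simp add: abs_mult)
  have "\<bar>(avg \<tau> ^^ Suc j) g t - 2^Suc j * g t\<bar> \<le> real j * 2^j / 2 * D + real j * 2^j / 2 * D + 2^j * D"
    unfolding eq using i1 i2 i4 by linarith
  also have "\<dots> = real (Suc j) * 2^Suc j / 2 * D" by (simp add: algebra_simps)
  finally show ?case .
qed

lemma doubling:
  assumes "\<And>l. l < j \<Longrightarrow> \<bar>fd (Suc j) \<tau> w (t + real l * \<tau>)\<bar> \<le> D"
  shows "\<bar>fd j (2*\<tau>) w t - 2^j * fd j \<tau> w t\<bar> \<le> real j * 2^j / 2 * D"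
proof -
  have "fd 1 \<tau> (fd j \<tau> w) = fd (Suc j) \<tau> w" by (simp add: fun_eq_iff)
  then show ?thesis unfolding fd_double using avg_pow_bound[of j \<tau> "fd j \<tau> w" t D] assms by simp
qed




definition hypsCL :: "nat \<Rightarrow> real \<Rightarrow> (real \<Rightarrow> real) \<Rightarrow> real \<Rightarrow> real \<Rightarrow> real \<Rightarrow> real \<Rightarrow> bool" where
 "hypsCL m s w H M R t0 \<longleftrightarrow> 0 < H \<and> 0 \<le> M \<and> 0 \<le> R \<and>
    (\<forall>t. t0 \<le> t \<and> t \<le> t0 + real (m*m+m) * H \<longrightarrow> \<bar>w t\<bar> \<le> M) \<and>
    (\<forall>t \<tau>. 0 < \<tau> \<and> \<tau> \<le> H \<longrightarrow> \<bar>fd m \<tau> w t\<bar> \<le> R * \<tau> powr s)"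

definition levelP :: "nat \<Rightarrow> real \<Rightarrow> real \<Rightarrow> nat \<Rightarrow> real \<Rightarrow> real \<Rightarrow> bool" where
 "levelP m s \<rho> j a b \<longleftrightarrow> (\<forall>w H M R t0 n t. hypsCL m s w H M R t0 \<longrightarrow> t0 \<le> t \<longrightarrow>
     t \<le> t0 + real (j*j) * H \<longrightarrow>
     \<bar>fd j (H/2^n) w t\<bar> \<le> a * (1/2)^(n*j) * M + b * R * H powr s * \<rho>^n)"

lemma half_pow_powr:
  fixes H s :: real
  assumes "0 \<le> H"
  shows "(H/2^n) powr s = H powr s * (2 powr (-s))^n"
proof -
  have "(2::real)^n = 2 powr real n" by (simp add: powr_realpow)
  then have "(H/2^n) powr s = H powr s / 2 powr (real n * s)"
    by (simp add: powr_divide powr_powr)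
  also have "\<dots> = H powr s * 2 powr (- (real n * s))"
    by (simp add: powr_minus_divide)
  also have "(2 powr (-s))^n = 2 powr (real n * (-s))"
    by (simp add: powr_power)
  ultimately show ?thesis by simp
qed

lemma level_top:
  assumes "1 \<le> \<sigma>0" "\<sigma>0 \<le> s"
  shows "levelP m s (2 powr (-\<sigma>0)) m 0 1"
  unfolding levelP_def
proof (intro allI impI)
  fix w H M R t0 n t
  assume hy: "hypsCL m s w H M R t0"
  then have H: "0 < H" and R: "0 \<le> R" and H2: "\<And>t \<tau>. 0 < \<tau> \<Longrightarrow> \<tau> \<le> H \<Longrightarrow> \<bar>fd m \<tau> w t\<bar> \<le> R * \<tau> powr s"
    unfolding hypsCL_def by auto
  have tp: "0 < H/2^n" using H by simp
  have tl: "H/2^n \<le> H" using H by (simp add: divide_le_eq)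
  have "\<bar>fd m (H/2^n) w t\<bar> \<le> R * (H/2^n) powr s" using H2[OF tp tl] .
  also have "\<dots> = R * H powr s * (2 powr (-s))^n" using H by (simp add: half_pow_powr)
  also have "\<dots> \<le> R * H powr s * (2 powr (-\<sigma>0))^n"
    apply (rule mult_left_mono)
     apply (rule power_mono)
    using assms by (auto intro: powr_mono simp: R)
  finally show "\<bar>fd m (H/2^n) w t\<bar> \<le> 0 * (1/2)^(n*m) * M + 1 * R * H powr s * (2 powr (-\<sigma>0))^n"
    by simp
qed

lemma level_step:
  assumes j2: "2 \<le> j" and jm: "Suc j \<le> m" and rho: "1/4 < \<rho>"
    and lv: "levelP m s \<rho> (Suc j) a' b'" and a': "0 \<le> a'" and b': "0 \<le> b'"
  shows "levelP m s \<rho> j (2^j + real j / 2 * a') (real j / 2 * b' * \<rho> / (\<rho> - 1/4))"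
  unfolding levelP_def
proof (intro allI impI)
  fix w H M R t0 n t
  assume hy: "hypsCL m s w H M R t0" and t0t: "t0 \<le> t" and tt: "t \<le> t0 + real (j*j) * H"
  from hy have H: "0 < H" and M: "0 \<le> M" and R: "0 \<le> R"
    and H1: "\<And>t. t0 \<le> t \<Longrightarrow> t \<le> t0 + real (m*m+m) * H \<Longrightarrow> \<bar>w t\<bar> \<le> M"
    unfolding hypsCL_def by auto
  define c where "c = real j / 2 * a'"
  define b where "b = real j / 2 * b' * \<rho> / (\<rho> - 1/4)"
  have c0: "0 \<le> c" using a' by (simp add: c_def)
  have b0: "0 \<le> b" using b' rho by (simp add: b_def)
  have nz: "\<rho> - 1/4 \<noteq> 0" using rho by simp
  have bkey: "real j / 2 * b' * \<rho> = b * (\<rho> - 1/4)" unfolding b_def using nz by (metis nonzero_eq_divide_eq)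
  have jm': "j \<le> m" using jm by simp
  have jjmm: "real (j*j) + real j \<le> real (m*m+m)"
  proof -
    have "j*j \<le> m*m" using jm' by (simp add: mult_le_mono)
    then show ?thesis using jm' by linarith
  qed
  have main: "\<forall>t. t0 \<le> t \<and> t \<le> t0 + real (j*j) * H \<longrightarrow>
     \<bar>fd j (H/2^n) w t\<bar> \<le> (2^j + c * (1 - (1/2)^n)) * (1/2)^(n*j) * M + b * R * H powr s * \<rho>^n"
  proof (induction n)
    case 0
    show ?case
    proof (intro allI impI)
      fix t assume t: "t0 \<le> t \<and> t \<le> t0 + real (j*j) * H"
      have "\<bar>fd j H w t\<bar> \<le> 2^j * M"
      proof (rule fd_bound)
        fix l assume l: "l \<le> j"
        show "\<bar>w (t + real l * H)\<bar> \<le> M"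
        proof (rule H1)
          have "0 \<le> real l * H" using H by simp
          then show "t0 \<le> t + real l * H" using t by linarith
          have "real l * H \<le> real j * H" using l H by simp
          moreover have "(real (j*j) + real j) * H \<le> real (m*m+m) * H"
            using jjmm H by (simp only: mult_right_mono less_imp_le)
          ultimately show "t + real l * H \<le> t0 + real (m*m+m) * H" using t
            by (simp add: algebra_simps)
        qed
      qed
      moreover have "0 \<le> b * R * H powr s" using b0 R by simp
      ultimately show "\<bar>fd j (H/2^0) w t\<bar> \<le> (2^j + c * (1 - (1/2)^0)) * (1/2)^(0*j) * M + b * R * H powr s * \<rho>^0"
        by simp
    qed
  next
    case (Suc n)
    show ?case
    proof (intro allI impI)
      fix t assume t: "t0 \<le> t \<and> t \<le> t0 + real (j*j) * H"
      define \<tau> where "\<tau> = H / 2^Suc n"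
      have tpos: "0 < \<tau>" using H by (simp add: \<tau>_def)
      have "(1::real) \<le> 2^Suc n" by (rule one_le_power) simp
      then have tle: "\<tau> \<le> H" using H unfolding \<tau>_def by (simp add: divide_le_eq)
      have t2: "2 * \<tau> = H / 2^n" by (simp add: \<tau>_def)
      define D where "D = a' * (1/2)^(Suc n * Suc j) * M + b' * R * H powr s * \<rho>^Suc n"
      have Dl: "\<bar>fd (Suc j) \<tau> w (t + real l * \<tau>)\<bar> \<le> D" if l: "l < j" for l
      proof -
        have "0 \<le> real l * \<tau>" using tpos by simp
        then have a1: "t0 \<le> t + real l * \<tau>" using t by linarith
        have "real l * \<tau> \<le> real j * H" using l tle tpos
          by (meson less_imp_le mult_mono of_nat_0_le_iff of_nat_mono)
        moreover have "real (j*j) * H + real j * H \<le> real (Suc j * Suc j) * H"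
        proof -
          have "real (j*j) + real j \<le> real (Suc j * Suc j)" by simp
          then show ?thesis using H by (simp only: distrib_right[symmetric] mult_right_mono less_imp_le)
        qed
        ultimately have a2: "t + real l * \<tau> \<le> t0 + real (Suc j * Suc j) * H" using t by linarith
        show ?thesis using lv hy a1 a2 unfolding levelP_def D_def \<tau>_def by blast
      qed
      have dbl: "\<bar>fd j (2*\<tau>) w t - 2^j * fd j \<tau> w t\<bar> \<le> real j * 2^j / 2 * D"
        by (rule doubling) (rule Dl)
      define h :: real where "h = (1/2)^n"
      define g :: real where "g = (1/2)^j"
      define u :: real where "u = (1/2)^(n*j)"
      have IH: "\<bar>fd j (2*\<tau>) w t\<bar> \<le> (2^j + c * (1 - h)) * u * M + b * R * H powr s * \<rho>^n"
        using Suc.IH t unfolding t2 h_def u_def by blast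
      have g2: "g * 2^j = 1" by (simp add: g_def power_mult_distrib[symmetric])
      have gq: "g \<le> 1/4"
      proof -
        have "(1/2::real)^j \<le> (1/2)^2" using j2 by (rule power_decreasing) auto
        then show ?thesis by (simp add: g_def power2_eq_square)
      qed
      have X: "\<bar>fd j \<tau> w t\<bar> \<le> ((2^j + c * (1 - h)) * u * M + b * R * H powr s * \<rho>^n) * g + real j / 2 * D"
      proof -
        have "2^j * \<bar>fd j \<tau> w t\<bar> \<le> (2^j + c * (1 - h)) * u * M + b * R * H powr s * \<rho>^n + real j * 2^j / 2 * D"
        proof -
          have "2^j * \<bar>fd j \<tau> w t\<bar> = \<bar>2^j * fd j \<tau> w t\<bar>" by (simp add: abs_mult)
          also have "\<dots> \<le> \<bar>fd j (2*\<tau>) w t\<bar> + \<bar>fd j (2*\<tau>) w t - 2^j * fd j \<tau> w t\<bar>" by arith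
          finally show ?thesis using IH dbl by linarith
        qed
        then have "\<bar>fd j \<tau> w t\<bar> \<le> ((2^j + c * (1 - h)) * u * M + b * R * H powr s * \<rho>^n + real j * 2^j / 2 * D) / 2^j"
          by (simp add: pos_le_divide_eq mult.commute)
        also have "\<dots> = ((2^j + c * (1 - h)) * u * M + b * R * H powr s * \<rho>^n) * g + real j / 2 * D"
          by (simp add: g_def power_one_over field_simps)
        finally show ?thesis .
      qed
      have e1: "(1/2::real)^(Suc n * j) = u * g" by (simp add: u_def g_def power_add)
      have e2: "(1/2::real)^(Suc n * Suc j) = u * g * (h / 2)"
      proof -
        have "Suc n * Suc j = n * j + j + n + 1" by simp
        then show ?thesis by (simp only: u_def g_def h_def power_add) simp
      qed
      have e3: "(1/2::real)^Suc n = h / 2" by (simp add: h_def)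
      have Mpart: "(2^j + c * (1 - h)) * u * M * g + real j / 2 * (a' * (u * g * (h / 2)) * M)
           = (2^j + c * (1 - h / 2)) * (u * g) * M"
        by (simp add: c_def field_simps)
      have Rpart: "b * R * H powr s * \<rho>^n * g + real j / 2 * (b' * R * H powr s * \<rho>^Suc n)
          \<le> b * R * H powr s * \<rho>^Suc n"
      proof -
        define Z where "Z = R * H powr s * \<rho>^n"
        have Z0: "0 \<le> Z" using R rho by (simp add: Z_def)
        have "b * g + real j / 2 * b' * \<rho> \<le> b * \<rho>"
        proof -
          have "b * g \<le> b * (1/4)" using gq b0 by (rule mult_left_mono)
          then show ?thesis using bkey by (simp add: algebra_simps)
        qed
        then have "Z * (b * g + real j / 2 * b' * \<rho>) \<le> Z * (b * \<rho>)" using Z0 by (rule mult_left_mono)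
        then show ?thesis by (simp add: Z_def algebra_simps)
      qed
      have "\<bar>fd j \<tau> w t\<bar> \<le> (2^j + c * (1 - h / 2)) * (u * g) * M + b * R * H powr s * \<rho>^Suc n"
      proof -
        have eqX: "((2^j + c*(1-h))*u*M + b*R*H powr s*\<rho>^n)*g + real j/2*D = ((2^j + c*(1-h))*u*M*g + real j/2*(a'*(u*g*(h/2))*M)) + (b*R*H powr s*\<rho>^n*g + real j/2*(b'*R*H powr s*\<rho>^Suc n))"
          unfolding D_def e2 by (simp add: algebra_simps)
        show ?thesis using X Mpart Rpart eqX by linarith
      qed
      then show "\<bar>fd j (H / 2^Suc n) w t\<bar> \<le> (2^j + c * (1 - (1/2)^Suc n)) * (1/2)^(Suc n * j) * M + b * R * H powr s * \<rho>^Suc n"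
        unfolding e1 e3 \<tau>_def[symmetric] .
    qed
  qed
  have "\<bar>fd j (H/2^n) w t\<bar> \<le> (2^j + c * (1 - (1/2)^n)) * (1/2)^(n*j) * M + b * R * H powr s * \<rho>^n"
    using main t0t tt by blast
  also have "\<dots> \<le> (2^j + c) * (1/2)^(n*j) * M + b * R * H powr s * \<rho>^n"
  proof -
    have "c * (1 - (1/2)^n) \<le> c" using c0 by (simp add: mult_left_le)
    then have "(2^j + c * (1 - (1/2::real)^n)) * ((1/2)^(n*j) * M) \<le> (2^j + c) * ((1/2)^(n*j) * M)"
      using M by (intro mult_right_mono) auto
    then show ?thesis by (simp add: mult.assoc)
  qed
  finally show "\<bar>fd j (H/2^n) w t\<bar> \<le> (2^j + real j / 2 * a') * (1/2)^(n*j) * M + real j / 2 * b' * \<rho> / (\<rho> - 1/4) * R * H powr s * \<rho>^n"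
    by (simp add: c_def b_def)
qed


lemma levels:
  assumes s1: "1 \<le> \<sigma>0" "\<sigma>0 < 2" "\<sigma>0 \<le> s"
  shows "m - j = d \<Longrightarrow> 2 \<le> j \<Longrightarrow> j \<le> m \<Longrightarrow> \<exists>a b. 0 \<le> a \<and> 0 \<le> b \<and> levelP m s (2 powr (-\<sigma>0)) j a b"
proof (induction d arbitrary: j)
  case 0
  then have "j = m" by simp
  then show ?case using level_top[OF s1(1) s1(3), of m] by (intro exI[of _ 0] exI[of _ 1]) auto
next
  case (Suc d)
  have jm: "Suc j \<le> m" using Suc.prems by simp
  have md: "m - Suc j = d" using Suc.prems(1) by arith
  have j2': "2 \<le> Suc j" using Suc.prems(2) by simp
  obtain a' b' where ab: "0 \<le> a'" "0 \<le> b'" "levelP m s (2 powr (-\<sigma>0)) (Suc j) a' b'"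
    using Suc.IH[OF md j2' jm] by blast
  have rho: "1/4 < (2::real) powr (-\<sigma>0)"
  proof -
    have "(2::real) powr (-2) < 2 powr (-\<sigma>0)" using s1 by (intro powr_less_mono) auto
    moreover have "(2::real) powr (-2) = 1/4" by (simp add: powr_minus_divide)
    ultimately show ?thesis by simp
  qed
  have "levelP m s (2 powr (-\<sigma>0)) j (2^j + real j / 2 * a') (real j / 2 * b' * (2 powr (-\<sigma>0)) / ((2 powr (-\<sigma>0)) - 1/4))"
    by (rule level_step[OF Suc.prems(2) jm rho ab(3) ab(1) ab(2)])
  moreover have "0 \<le> real j / 2 * b' * (2 powr (-\<sigma>0)) / ((2 powr (-\<sigma>0)) - 1/4)"
    using ab rho by simp
  moreover have "0 \<le> (2::real)^j + real j / 2 * a'" using ab by simp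
  ultimately show ?case by blast
qed

lemma level_one:
  assumes lv2: "levelP m s \<rho> 2 a2 b2" and a2: "0 \<le> a2" and b2: "0 \<le> b2" and rho: "0 \<le> \<rho>"
    and m1: "1 \<le> m" and hy: "hypsCL m s w H M R t0"
  shows "\<bar>fd 1 (H/2^n) w t0\<bar> \<le> (2 + a2/2 * (1 - (1/2)^n)) * (1/2)^n * M
            + b2/2 * R * H powr s * (1/2)^n * (\<Sum>i<n. (2*\<rho>)^(Suc i))"
proof (induction n)
  case 0
  from hy have H: "0 < H" and M: "0 \<le> M"
    and H1: "\<And>t. t0 \<le> t \<Longrightarrow> t \<le> t0 + real (m*m+m) * H \<Longrightarrow> \<bar>w t\<bar> \<le> M"
    unfolding hypsCL_def by auto
  have "1 \<le> m*m+m" using m1 by simp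
  then have "1 \<le> real (m*m+m)" by (metis of_nat_1 of_nat_le_iff)
  then have "H \<le> real (m*m+m) * H" using H by simp
  then have "\<bar>w (t0 + H)\<bar> \<le> M" using H by (intro H1) auto
  moreover have "\<bar>w t0\<bar> \<le> M" using H by (intro H1) auto
  ultimately show ?case by simp
next
  case (Suc n)
  from hy have H: "0 < H" and M: "0 \<le> M" and R: "0 \<le> R" unfolding hypsCL_def by auto
  define \<tau> where "\<tau> = H / 2^Suc n"
  have t2: "2 * \<tau> = H / 2^n" by (simp add: \<tau>_def)
  define D where "D = a2 * (1/2)^(Suc n * 2) * M + b2 * R * H powr s * \<rho>^Suc n"
  have Dl: "\<bar>fd (Suc 1) \<tau> w (t0 + real l * \<tau>)\<bar> \<le> D" if "l < 1" for l
  proof -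
    have "l = 0" using that by simp
    moreover have "t0 \<le> t0 + real (2*2) * H" using H by simp
    moreover have "\<bar>fd 2 (H/2^Suc n) w t0\<bar> \<le> D"
      using lv2 hy \<open>t0 \<le> t0 + real (2*2) * H\<close> unfolding levelP_def D_def by blast
    ultimately show ?thesis by (simp del: fd.simps add: \<tau>_def numeral_2_eq_2)
  qed
  have dbl: "\<bar>fd 1 (2*\<tau>) w t0 - 2^1 * fd 1 \<tau> w t0\<bar> \<le> real 1 * 2^1 / 2 * D"
    by (rule doubling) (rule Dl)
  define h :: real where "h = (1/2)^n"
  have IH: "\<bar>fd 1 (2*\<tau>) w t0\<bar> \<le> (2 + a2/2 * (1 - h)) * h * M + b2/2 * R * H powr s * h * (\<Sum>i<n. (2*\<rho>)^(Suc i))"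
    using Suc.IH unfolding t2 h_def .
  have X: "\<bar>fd 1 \<tau> w t0\<bar> \<le> ((2 + a2/2 * (1 - h)) * h * M + b2/2 * R * H powr s * h * (\<Sum>i<n. (2*\<rho>)^(Suc i))) / 2 + D / 2"
  proof -
    have d1: "\<bar>fd 1 (2*\<tau>) w t0 - 2 * fd 1 \<tau> w t0\<bar> \<le> D" using dbl by (simp del: fd.simps)
    have gen: "\<And>A x P D::real. \<bar>A\<bar> \<le> P \<Longrightarrow> \<bar>A - 2*x\<bar> \<le> D \<Longrightarrow> \<bar>x\<bar> \<le> P/2 + D/2" by arith
    show ?thesis by (rule gen[OF IH d1])
  qed
  have e2: "(1/2::real)^(Suc n * 2) = (h/2) * (h/2)"
    by (simp add: h_def power_mult power2_eq_square power_mult_distrib)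
  have e3: "(1/2::real)^Suc n = h / 2" by (simp add: h_def)
  have e4: "(2*\<rho>)^Suc n * (h/2) = \<rho>^Suc n"
  proof -
    have "(2*\<rho>)^Suc n * (h/2) = \<rho>^Suc n * (2^Suc n * (1/2)^Suc n)"
      by (simp add: h_def power_mult_distrib)
    also have "2^Suc n * (1/2::real)^Suc n = 1" by (simp add: power_mult_distrib[symmetric])
    finally show ?thesis by simp
  qed
  have "((2 + a2/2 * (1 - h)) * h * M + b2/2 * R * H powr s * h * (\<Sum>i<n. (2*\<rho>)^(Suc i))) / 2 + D / 2
     = (2 + a2/2 * (1 - h/2)) * (h/2) * M + b2/2 * R * H powr s * (h/2) * (\<Sum>i<Suc n. (2*\<rho>)^(Suc i))"
  proof -
    have "b2/2 * R * H powr s * (h/2) * (\<Sum>i<Suc n. (2*\<rho>)^(Suc i))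
       = b2/2 * R * H powr s * (h/2) * (\<Sum>i<n. (2*\<rho>)^(Suc i)) + b2/2 * R * H powr s * ((2*\<rho>)^Suc n * (h/2))"
      by (simp add: algebra_simps)
    then show ?thesis unfolding D_def e2 e4 by (simp add: field_simps)
  qed
  then show ?case using X unfolding e3 \<tau>_def by simp
qed




theorem CL:
  fixes s :: real
  assumes s1: "1 \<le> s"
  shows "\<exists>C\<ge>0. \<forall>w H M R t0 n. hypsCL (nat \<lfloor>s\<rfloor> + 1) s w H M R t0 \<longrightarrow>
     \<bar>w (t0 + H/2^n) - w t0\<bar> \<le> C * (1/2)^n * (M + R * H powr s * (\<Sum>i<n. (2 * 2 powr (- min s (3/2)))^(Suc i)))"
proof -
  define m where "m = nat \<lfloor>s\<rfloor> + 1"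
  define \<sigma>0 where "\<sigma>0 = min s (3/2)"
  have "(1::int) \<le> \<lfloor>s\<rfloor>" using s1 by (simp add: le_floor_iff)
  then have m2: "2 \<le> m" by (simp add: m_def le_nat_iff)
  have sg: "1 \<le> \<sigma>0" "\<sigma>0 < 2" "\<sigma>0 \<le> s" using s1 by (auto simp: \<sigma>0_def)
  obtain a2 b2 where ab: "0 \<le> a2" "0 \<le> b2" "levelP m s (2 powr (-\<sigma>0)) 2 a2 b2"
  proof -
    have "\<exists>a b. 0 \<le> a \<and> 0 \<le> b \<and> levelP m s (2 powr (-\<sigma>0)) 2 a b"
      by (rule levels[OF sg]) (use m2 in auto)
    then show ?thesis using that by blast
  qed
  define C where "C = 2 + a2/2 + b2/2"
  have C0: "0 \<le> C" using ab by (simp add: C_def)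
  have "\<bar>w (t0 + H/2^n) - w t0\<bar> \<le> C * (1/2)^n * (M + R * H powr s * (\<Sum>i<n. (2 * 2 powr (-\<sigma>0))^(Suc i)))"
    if hy: "hypsCL m s w H M R t0" for w H M R t0 n
  proof -
    from hy have M: "0 \<le> M" and R: "0 \<le> R" unfolding hypsCL_def by auto
    define S where "S = (\<Sum>i<n. (2 * 2 powr (-\<sigma>0))^(Suc i))"
    have S0: "0 \<le> S" unfolding S_def by (intro sum_nonneg) simp
    have L: "\<bar>fd 1 (H/2^n) w t0\<bar> \<le> (2 + a2/2 * (1 - (1/2)^n)) * (1/2)^n * M
            + b2/2 * R * H powr s * (1/2)^n * S"
      unfolding S_def using level_one[OF ab(3) ab(1) ab(2) _ _ hy] m2 by simp
    have "(2 + a2/2 * (1 - (1/2::real)^n)) \<le> C"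
    proof -
      have "a2/2 * (1 - (1/2::real)^n) \<le> a2/2" using ab(1) by (simp add: mult_left_le)
      then show ?thesis using ab by (simp add: C_def)
    qed
    then have a: "(2 + a2/2 * (1 - (1/2)^n)) * (1/2)^n * M \<le> C * (1/2)^n * M"
      using M by (intro mult_right_mono) auto
    have "b2/2 \<le> C" using ab by (simp add: C_def)
    then have b: "b2/2 * R * H powr s * (1/2)^n * S \<le> C * R * H powr s * (1/2)^n * S"
      using R S0 by (intro mult_right_mono) auto
    have "\<bar>w (t0 + H/2^n) - w t0\<bar> = \<bar>fd 1 (H/2^n) w t0\<bar>" by (simp add: add.commute)
    also have "\<dots> \<le> C * (1/2)^n * M + C * R * H powr s * (1/2)^n * S" using L a b by linarith
    also have "\<dots> = C * (1/2)^n * (M + R * H powr s * S)" by (simp add: algebra_simps)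
    finally show ?thesis unfolding S_def .
  qed
  then show ?thesis using C0 unfolding m_def \<sigma>0_def by blast
qed

lemma geo_bound:
  fixes q :: real
  assumes "0 \<le> q" "q < 1"
  shows "(\<Sum>i<n. q^(Suc i)) \<le> 1 / (1 - q)"
proof -
  have "(\<Sum>i<n. q^(Suc i)) = q * (\<Sum>i<n. q^i)" by (simp add: sum_distrib_left)
  also have "(\<Sum>i<n. q^i) = (1 - q^n) / (1 - q)" using assms by (simp add: sum_gp_strict)
  also have "q * ((1 - q^n) / (1 - q)) \<le> 1 / (1 - q)"
  proof -
    have "q^n \<le> 1" using assms by (simp add: power_le_one)
    moreover have "0 \<le> q^n" using assms by simp
    ultimately have "q * (1 - q^n) \<le> 1" using assms by (intro mult_le_one) auto
    then show ?thesis using assms by (simp add: divide_right_mono)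
  qed
  finally show ?thesis .
qed

lemma exists_scale:
  fixes \<beta> X :: real
  assumes "0 < \<beta>" "\<beta> \<le> X"
  shows "\<exists>k. 2^k * \<beta> \<le> X \<and> X < 2^Suc k * \<beta>"
proof -
  obtain N where N: "X / \<beta> < 2^N" using real_arch_pow[of 2 "X/\<beta>"] by auto
  then have N': "X < 2^N * \<beta>" using assms by (simp add: divide_less_eq)
  define n where "n = (LEAST n. X < 2^n * \<beta>)"
  have n1: "X < 2^n * \<beta>" unfolding n_def by (rule LeastI[of _ N]) (rule N')
  have n0: "n \<noteq> 0"
  proof
    assume "n = 0"
    then show False using n1 assms by simp
  qed
  then obtain k where k: "n = Suc k" by (cases n) auto
  have "\<not> X < 2^k * \<beta>"
  proof
    assume "X < 2^k * \<beta>"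
    then have "n \<le> k" unfolding n_def by (rule Least_le)
    then show False using k by simp
  qed
  then show ?thesis using n1 k by (intro exI[of _ k]) simp
qed

lemma ln2_third: "1/3 \<le> ln (2::real)"
proof -
  have "exp (1/3::real) ^ 3 = exp (real 3 * (1/3))" by (rule exp_of_nat_mult[symmetric])
  also have "\<dots> = exp 1" by simp
  also have "\<dots> \<le> 3" by (rule exp_le)
  also have "\<dots> < 2^3" by simp
  finally have "exp (1/3::real) < 2" by (rule power_less_imp_less_base) simp
  then have "ln (exp (1/3::real)) < ln 2" by (rule ln_less_cancel_iff[THEN iffD2, rotated 2]) auto
  then show ?thesis by simp
qed
lemma k_log:
  fixes \<beta> X :: real
  assumes "0 < \<beta>" "2^k * \<beta> \<le> X"
  shows "real k \<le> 3 * ln (exp 1 + X / \<beta>)"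
proof -
  have "real k * (1/3) \<le> real k * ln 2" using ln2_third by (intro mult_left_mono) auto
  also have "\<dots> = ln (2^k)" by (simp add: ln_realpow)
  also have "\<dots> \<le> ln (X/\<beta>)"
  proof -
    have "(2::real)^k \<le> X/\<beta>" using assms by (simp add: le_divide_eq)
    moreover have "0 < (2::real)^k" by simp
    ultimately show ?thesis by (rule ln_mono)
  qed
  also have "\<dots> \<le> ln (exp 1 + X/\<beta>)"
  proof -
    have "0 < (2::real)^k" by simp
    moreover have "(2::real)^k \<le> X/\<beta>" using assms by (simp add: le_divide_eq)
    ultimately have "0 < X/\<beta>" by linarith
    moreover have "X/\<beta> \<le> exp 1 + X/\<beta>" by simp
    ultimately show ?thesis by (intro ln_mono) auto
  qed
  finally show ?thesis by simp
qed




definition Fac :: "real \<Rightarrow> real \<Rightarrow> real \<Rightarrow> real" where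
  "Fac s \<beta> X = (if s = 1 then ln (exp 1 + X / \<beta>) else 1)"

lemma Fac_ge1: "0 < \<beta> \<Longrightarrow> 0 \<le> X \<Longrightarrow> 1 \<le> Fac s \<beta> X"
proof -
  assume a: "0 < \<beta>" "0 \<le> X"
  have "0 \<le> X / \<beta>" using a by simp
  then have "ln (exp 1) \<le> ln (exp 1 + X / \<beta>)" by (intro ln_mono) auto
  then show ?thesis by (simp add: Fac_def)
qed

lemma Fac_mono: "0 < \<beta> \<Longrightarrow> 0 \<le> X \<Longrightarrow> X \<le> Y \<Longrightarrow> Fac s \<beta> X \<le> Fac s \<beta> Y"
proof -
  assume a: "0 < \<beta>" "0 \<le> X" "X \<le> Y"
  have "X / \<beta> \<le> Y / \<beta>" using a by (simp add: divide_right_mono)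
  moreover have "0 < exp 1 + X / \<beta>" using a by (smt (verit) divide_nonneg_pos exp_gt_zero)
  ultimately show ?thesis by (simp add: Fac_def ln_mono)
qed

lemma CL_app:
  fixes s :: real
  assumes s1: "1 \<le> s"
  shows "\<exists>C\<ge>0. \<forall>w X \<beta> M R t0. 0 < \<beta> \<longrightarrow> \<beta> \<le> X \<longrightarrow> 0 \<le> M \<longrightarrow> 0 \<le> R \<longrightarrow>
     (\<forall>t. t0 \<le> t \<and> t \<le> t0 + real ((nat \<lfloor>s\<rfloor> + 1)*(nat \<lfloor>s\<rfloor> + 1)+(nat \<lfloor>s\<rfloor> + 1)) * X \<longrightarrow> \<bar>w t\<bar> \<le> M) \<longrightarrow>
     (\<forall>t \<tau>. 0 < \<tau> \<and> \<tau> \<le> X \<longrightarrow> \<bar>fd (nat \<lfloor>s\<rfloor> + 1) \<tau> w t\<bar> \<le> R * \<tau> powr s) \<longrightarrow>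
     \<bar>w (t0 + \<beta>) - w t0\<bar> \<le> C * (\<beta> / X * M + R * \<beta> * X powr (s - 1) * Fac s \<beta> X)"
proof -
  define m where "m = nat \<lfloor>s\<rfloor> + 1"
  define q :: real where "q = 2 * 2 powr (- min s (3/2))"
  obtain C0 where C0: "C0 \<ge> 0" and CL0: "\<And>w H M R t0 n. hypsCL m s w H M R t0 \<Longrightarrow>
     \<bar>w (t0 + H/2^n) - w t0\<bar> \<le> C0 * (1/2)^n * (M + R * H powr s * (\<Sum>i<n. q^(Suc i)))"
    using CL[OF s1] unfolding m_def q_def by blast
  define SB where "SB = (if s = 1 then 3 else 1 / (1 - q))"
  have q1: "s \<noteq> 1 \<Longrightarrow> 0 \<le> q \<and> q < 1"
  proof -
    assume "s \<noteq> 1"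
    then have "1 < min s (3/2)" using s1 by simp
    then have "(2::real) powr (- min s (3/2)) < 2 powr (-1)" by (intro powr_less_mono) auto
    then show ?thesis by (simp add: q_def powr_minus_divide)
  qed
  have SB0: "0 \<le> SB" using q1 by (auto simp: SB_def)
  define C where "C = C0 * (2 + SB)"
  have Cpos: "0 \<le> C" using C0 SB0 by (simp add: C_def)
  have main: "\<bar>w (t0 + \<beta>) - w t0\<bar> \<le> C * (\<beta> / X * M + R * \<beta> * X powr (s - 1) * Fac s \<beta> X)"
    if b: "0 < \<beta>" "\<beta> \<le> X" and M: "0 \<le> M" and R: "0 \<le> R"
      and H1: "\<forall>t. t0 \<le> t \<and> t \<le> t0 + real (m*m+m) * X \<longrightarrow> \<bar>w t\<bar> \<le> M"
      and H2: "\<forall>t \<tau>. 0 < \<tau> \<and> \<tau> \<le> X \<longrightarrow> \<bar>fd m \<tau> w t\<bar> \<le> R * \<tau> powr s"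
    for w X \<beta> M R t0
  proof -
    obtain k where k: "2^k * \<beta> \<le> X" "X < 2^Suc k * \<beta>" using exists_scale[OF b] by blast
    define H where "H = 2^k * \<beta>"
    have Hp: "0 < H" using b by (simp add: H_def)
    have HX: "H \<le> X" using k by (simp add: H_def)
    have X0: "0 < X" using b by simp
    have hy: "hypsCL m s w H M R t0"
      unfolding hypsCL_def
    proof (intro conjI allI impI)
      fix t assume t: "t0 \<le> t \<and> t \<le> t0 + real (m*m+m) * H"
      have "real (m*m+m) * H \<le> real (m*m+m) * X" using HX by (intro mult_left_mono) auto
      then show "\<bar>w t\<bar> \<le> M" using H1 t by auto
    next
      fix t \<tau> assume "0 < \<tau> \<and> \<tau> \<le> H"
      then show "\<bar>fd m \<tau> w t\<bar> \<le> R * \<tau> powr s" using H2 HX by auto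
    qed (use Hp M R in auto)
    have Hk: "H / 2^k = \<beta>" by (simp add: H_def)
    define S where "S = (\<Sum>i<k. q^(Suc i))"
    have L: "\<bar>w (t0 + \<beta>) - w t0\<bar> \<le> C0 * (1/2)^k * (M + R * H powr s * S)"
      using CL0[OF hy, of k] unfolding Hk S_def .
    have hk: "(1/2::real)^k = \<beta> / H" using b by (simp add: H_def power_one_over)
    have t1: "\<beta> / H * M \<le> 2 * (\<beta> / X * M)"
    proof -
      have "X < 2 * H" using k by (simp add: H_def)
      then have "\<beta> / H \<le> 2 * (\<beta> / X)" using b Hp X0 by (simp add: field_simps)
      then have "\<beta> / H * M \<le> 2 * (\<beta> / X) * M" using M by (rule mult_right_mono)
      then show ?thesis by simp
    qed
    have t2: "\<beta> / H * (R * H powr s * S) = R * \<beta> * H powr (s - 1) * S"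
    proof -
      have "H powr s = H * H powr (s - 1)" using Hp by (simp add: powr_mult_base)
      then show ?thesis using Hp by (simp add: field_simps)
    qed
    have S0: "0 \<le> S" unfolding S_def using q1 by (cases "s = 1") (auto simp: q_def intro!: sum_nonneg)
    have t3: "H powr (s - 1) \<le> X powr (s - 1)" using HX Hp s1 by (intro powr_mono2) auto
    have SB: "S \<le> SB * Fac s \<beta> X"
    proof (cases "s = 1")
      case True
      then have "q = 1" by (simp add: q_def powr_minus_divide)
      then have "S = real k" by (simp add: S_def)
      also have "\<dots> \<le> 3 * ln (exp 1 + X / \<beta>)" by (rule k_log[OF b(1) k(1)])
      finally show ?thesis using True by (simp add: SB_def Fac_def)
    next
      case False
      then show ?thesis using geo_bound[of q k] q1 by (simp add: SB_def Fac_def S_def)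
    qed
    have "C0 * (1/2)^k * (M + R * H powr s * S) = C0 * (\<beta> / H * M + \<beta> / H * (R * H powr s * S))"
      unfolding hk by (simp add: algebra_simps)
    also have "\<dots> \<le> C0 * (2 * (\<beta> / X * M) + R * \<beta> * X powr (s - 1) * (SB * Fac s \<beta> X))"
    proof (rule mult_left_mono[OF _ C0])
      have "R * \<beta> * H powr (s - 1) * S \<le> R * \<beta> * X powr (s - 1) * S"
        using t3 R b S0 by (intro mult_right_mono mult_left_mono) auto
      also have "\<dots> \<le> R * \<beta> * X powr (s - 1) * (SB * Fac s \<beta> X)"
        using SB R b by (intro mult_left_mono) auto
      finally show "\<beta> / H * M + \<beta> / H * (R * H powr s * S) \<le> 2 * (\<beta> / X * M) + R * \<beta> * X powr (s - 1) * (SB * Fac s \<beta> X)"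
        using t1 t2 by linarith
    qed
    also have "\<dots> \<le> C * (\<beta> / X * M + R * \<beta> * X powr (s - 1) * Fac s \<beta> X)"
    proof -
      have p1: "0 \<le> \<beta> / X * M" using b M by simp
      have p2: "0 \<le> R * \<beta> * X powr (s - 1) * Fac s \<beta> X" using R b Fac_ge1[OF b(1), of X s] by simp
      define A1 where "A1 = \<beta> / X * M"
      define B1 where "B1 = R * \<beta> * X powr (s - 1) * Fac s \<beta> X"
      have e: "R * \<beta> * X powr (s - 1) * (SB * Fac s \<beta> X) = SB * B1" by (simp add: B1_def ac_simps)
      have q1: "0 \<le> SB * A1" using SB0 p1 unfolding A1_def by (rule mult_nonneg_nonneg)
      have q2: "0 \<le> B1" using p2 by (simp add: B1_def)
      have "(2 + SB) * (A1 + B1) = 2 * A1 + SB * B1 + (SB * A1 + 2 * B1)" by (simp add: algebra_simps)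
      then have "2 * A1 + R * \<beta> * X powr (s - 1) * (SB * Fac s \<beta> X) \<le> (2 + SB) * (A1 + B1)"
        using e q1 q2 by linarith
      then have "C0 * (2 * A1 + R * \<beta> * X powr (s - 1) * (SB * Fac s \<beta> X)) \<le> C0 * ((2 + SB) * (A1 + B1))"
        using C0 by (rule mult_left_mono)
      then show ?thesis unfolding C_def A1_def B1_def by (simp add: mult.assoc)
    qed
    finally show ?thesis using L by linarith
  qed
  show ?thesis using Cpos main unfolding m_def by blast
qed




definition goodf :: "real \<Rightarrow> real \<Rightarrow> ('a::real_normed_vector \<Rightarrow> real) \<Rightarrow> bool" where
  "goodf s K f \<longleftrightarrow> 0 \<le> K \<and> (\<forall>x. \<bar>f x\<bar> \<le> K) \<and>
     (\<forall>p v. \<bar>fd (nat \<lfloor>s\<rfloor> + 1) 1 (\<lambda>t. f (p + t *\<^sub>R v)) 0\<bar> \<le> K * norm v powr s)"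

definition G :: "real \<Rightarrow> real \<Rightarrow> real \<Rightarrow> real" where
  "G s d Y = (if d = 0 then 0 else d * Y powr (s - 1) * Fac s d Y)"

lemma line_pure:
  assumes g: "goodf s K f"
  shows "\<bar>fd (nat \<lfloor>s\<rfloor> + 1) \<tau> (\<lambda>t. f (p + t *\<^sub>R v)) t0\<bar> \<le> K * \<bar>\<tau>\<bar> powr s * norm v powr s"
proof -
  define m where "m = nat \<lfloor>s\<rfloor> + 1"
  define W where "W = (\<lambda>t. f (p + t *\<^sub>R v))"
  have a: "fd m 1 (\<lambda>u. W (t0 + \<tau> * u)) 0 = fd m (\<tau> * 1) W (t0 + \<tau> * 0)" by (rule fd_affine)
  have b: "(\<lambda>u. W (t0 + \<tau> * u)) = (\<lambda>u. f ((p + t0 *\<^sub>R v) + u *\<^sub>R (\<tau> *\<^sub>R v)))"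
    by (rule ext) (simp add: W_def algebra_simps scaleR_add_left)
  have c: "fd m \<tau> W t0 = fd m 1 (\<lambda>u. f ((p + t0 *\<^sub>R v) + u *\<^sub>R (\<tau> *\<^sub>R v))) 0"
    using a unfolding b by simp
  have d: "\<bar>fd m 1 (\<lambda>u. f ((p + t0 *\<^sub>R v) + u *\<^sub>R (\<tau> *\<^sub>R v))) 0\<bar> \<le> K * norm (\<tau> *\<^sub>R v) powr s"
    using g unfolding goodf_def m_def by blast
  have "\<bar>fd m \<tau> (\<lambda>t. f (p + t *\<^sub>R v)) t0\<bar> \<le> K * norm (\<tau> *\<^sub>R v) powr s"
    using c d unfolding W_def by simp
  also have "norm (\<tau> *\<^sub>R v) powr s = \<bar>\<tau>\<bar> powr s * norm v powr s" by (simp add: powr_mult)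
  finally show ?thesis unfolding m_def by (simp add: mult.assoc)
qed

lemma Sr_line: "sdiff_pow r h f p = fd r 1 (\<lambda>\<sigma>. f ((p - (real r / 2) *\<^sub>R h) + \<sigma> *\<^sub>R h)) 0"
proof -
  have "(\<lambda>t. f (p + (t - real r / 2) *\<^sub>R h)) = (\<lambda>\<sigma>. f ((p - (real r / 2) *\<^sub>R h) + \<sigma> *\<^sub>R h))"
    by (rule ext) (simp add: algebra_simps scaleR_diff_left)
  then show ?thesis by (simp add: sdiff_pow_fd)
qed

lemma Sr_bound:
  assumes g: "goodf s K f" and rm: "nat \<lfloor>s\<rfloor> + 1 \<le> r"
  shows "\<bar>sdiff_pow r h f p\<bar> \<le> 2^(r - (nat \<lfloor>s\<rfloor> + 1)) * (K * norm h powr s)"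
proof -
  define m where "m = nat \<lfloor>s\<rfloor> + 1"
  define W where "W = (\<lambda>\<sigma>. f ((p - (real r / 2) *\<^sub>R h) + \<sigma> *\<^sub>R h))"
  have "sdiff_pow r h f p = fd ((r - m) + m) 1 W 0" using rm unfolding W_def m_def Sr_line by simp
  also have "\<dots> = fd (r - m) 1 (fd m 1 W) 0" by (rule fd_add)
  finally have e: "sdiff_pow r h f p = fd (r - m) 1 (fd m 1 W) 0" .
  have "\<bar>fd (r - m) 1 (fd m 1 W) 0\<bar> \<le> 2^(r - m) * (K * norm h powr s)"
  proof (rule fd_bound)
    fix l
    show "\<bar>fd m 1 W (0 + real l * 1)\<bar> \<le> K * norm h powr s"
      using line_pure[OF g, of 1 "p - (real r / 2) *\<^sub>R h" h] unfolding W_def m_def by simp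
  qed
  then show ?thesis using e unfolding m_def by simp
qed




lemma Sr_commute:
  assumes g: "goodf s K f" and tau: "0 < \<tau>" and ne: "norm e \<le> L" and s0: "0 \<le> s"
  shows "\<bar>fd (nat \<lfloor>s\<rfloor> + 1) \<tau> (\<lambda>t. sdiff_pow r h f (z + t *\<^sub>R e)) t0\<bar> \<le> 2^r * (K * L powr s) * \<tau> powr s"
proof -
  define m where "m = nat \<lfloor>s\<rfloor> + 1"
  define F where "F = (\<lambda>t \<sigma>. f ((z + t *\<^sub>R e - (real r / 2) *\<^sub>R h) + \<sigma> *\<^sub>R h))"
  have w: "(\<lambda>t. sdiff_pow r h f (z + t *\<^sub>R e)) = (\<lambda>t. fd r 1 (F t) 0)"
    by (rule ext) (simp only: Sr_line F_def)
  have "fd m \<tau> (\<lambda>t. fd r 1 (F t) 0) t0 = fd r 1 (\<lambda>u. fd m \<tau> (\<lambda>t. F t u) t0) 0"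
    by (rule fd_commute)
  moreover have "\<bar>fd r 1 (\<lambda>u. fd m \<tau> (\<lambda>t. F t u) t0) 0\<bar> \<le> 2^r * (K * L powr s * \<tau> powr s)"
  proof (rule fd_bound)
    fix l
    define \<sigma> where "\<sigma> = 0 + real l * 1"
    have "(\<lambda>t. F t \<sigma>) = (\<lambda>t. f ((z - (real r / 2) *\<^sub>R h + \<sigma> *\<^sub>R h) + t *\<^sub>R e))"
      by (rule ext) (simp add: F_def algebra_simps)
    then have "\<bar>fd m \<tau> (\<lambda>t. F t \<sigma>) t0\<bar> \<le> K * \<bar>\<tau>\<bar> powr s * norm e powr s"
      using line_pure[OF g, of \<tau> "z - (real r / 2) *\<^sub>R h + \<sigma> *\<^sub>R h" e t0] unfolding m_def by simp
    also have "\<dots> \<le> K * L powr s * \<tau> powr s"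
    proof -
      have K: "0 \<le> K" using g by (simp add: goodf_def)
      have "norm e powr s \<le> L powr s" using s0 ne by (intro powr_mono2) auto
      then show ?thesis using K tau by (simp add: mult_left_mono mult.commute mult.left_commute)
    qed
    finally show "\<bar>fd m \<tau> (\<lambda>t. F t (0 + real l * 1)) t0\<bar> \<le> K * L powr s * \<tau> powr s" unfolding \<sigma>_def .
  qed
  ultimately show ?thesis unfolding w m_def by (simp add: mult.assoc)
qed

lemma KL:
  fixes s :: real and r :: nat
  assumes s1: "1 \<le> s" and rm: "nat \<lfloor>s\<rfloor> + 1 \<le> r"
  shows "\<exists>C\<ge>0. \<forall>K (f::'a::real_normed_vector \<Rightarrow> real) z \<delta> h. goodf s K f \<longrightarrow> norm \<delta> \<le> norm h \<longrightarrow>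
     \<bar>sdiff_pow r h f (z + \<delta>) - sdiff_pow r h f z\<bar> \<le> C * K * G s (norm \<delta>) (norm h)"
proof -
  define m where "m = nat \<lfloor>s\<rfloor> + 1"
  obtain C0 where C0: "C0 \<ge> 0" and CA: "\<And>w X \<beta> M R t0. 0 < \<beta> \<Longrightarrow> \<beta> \<le> X \<Longrightarrow> 0 \<le> M \<Longrightarrow> 0 \<le> R \<Longrightarrow>
     (\<forall>t. t0 \<le> t \<and> t \<le> t0 + real (m*m+m) * X \<longrightarrow> \<bar>w t\<bar> \<le> M) \<Longrightarrow>
     (\<forall>t \<tau>. 0 < \<tau> \<and> \<tau> \<le> X \<longrightarrow> \<bar>fd m \<tau> w t\<bar> \<le> R * \<tau> powr s) \<Longrightarrow>
     \<bar>w (t0 + \<beta>) - w t0\<bar> \<le> C0 * (\<beta> / X * M + R * \<beta> * X powr (s - 1) * Fac s \<beta> X)"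
    using CL_app[OF s1] unfolding m_def by blast
  define C where "C = C0 * 2^(r+1)"
  have Cpos: "0 \<le> C" using C0 by (simp add: C_def)
  have "\<bar>sdiff_pow r h f (z + \<delta>) - sdiff_pow r h f z\<bar> \<le> C * K * G s (norm \<delta>) (norm h)"
    if g: "goodf s K f" and dh: "norm \<delta> \<le> norm h" for K and f :: "'a \<Rightarrow> real" and z \<delta> h
  proof (cases "\<delta> = 0")
    case True then show ?thesis by (simp add: G_def)
  next
    case False
    define \<beta> where "\<beta> = norm \<delta>"
    define X where "X = norm h"
    have bp: "0 < \<beta>" using False by (simp add: \<beta>_def)
    have bX: "\<beta> \<le> X" using dh by (simp add: \<beta>_def X_def)
    have Xp: "0 < X" using bp bX by simp
    have K: "0 \<le> K" using g by (simp add: goodf_def)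
    define e where "e = (1 / \<beta>) *\<^sub>R \<delta>"
    have ne: "norm e \<le> 1" using bp by (simp add: e_def \<beta>_def)
    have be: "\<beta> *\<^sub>R e = \<delta>" using bp by (simp add: e_def)
    define w where "w = (\<lambda>t. sdiff_pow r h f (z + t *\<^sub>R e))"
    define M where "M = 2^(r - m) * (K * X powr s)"
    define R where "R = 2^r * K"
    have M0: "0 \<le> M" using K by (simp add: M_def)
    have R0: "0 \<le> R" using K by (simp add: R_def)
    have H1: "\<forall>t. 0 \<le> t \<and> t \<le> 0 + real (m*m+m) * X \<longrightarrow> \<bar>w t\<bar> \<le> M"
      using Sr_bound[OF g rm] unfolding w_def M_def X_def m_def by blast
    have H2: "\<forall>t \<tau>. 0 < \<tau> \<and> \<tau> \<le> X \<longrightarrow> \<bar>fd m \<tau> w t\<bar> \<le> R * \<tau> powr s"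
    proof (intro allI impI)
      fix t \<tau> assume "0 < \<tau> \<and> \<tau> \<le> X"
      then have "\<bar>fd m \<tau> w t\<bar> \<le> 2^r * (K * 1 powr s) * \<tau> powr s"
        using Sr_commute[OF g _ ne, of \<tau> r h z t] s1 unfolding w_def m_def by simp
      then show "\<bar>fd m \<tau> w t\<bar> \<le> R * \<tau> powr s" by (simp add: R_def)
    qed
    have CL1: "\<bar>w (0 + \<beta>) - w 0\<bar> \<le> C0 * (\<beta> / X * M + R * \<beta> * X powr (s - 1) * Fac s \<beta> X)"
      by (rule CA[OF bp bX M0 R0 H1 H2])
    have lhs: "w (0 + \<beta>) - w 0 = sdiff_pow r h f (z + \<delta>) - sdiff_pow r h f z"
      unfolding w_def using be by simp
    define P where "P = K * \<beta> * X powr (s - 1)"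
    have P0: "0 \<le> P" using K bp by (simp add: P_def)
    have F1: "1 \<le> Fac s \<beta> X" using Fac_ge1[OF bp] Xp by simp
    have t1: "\<beta> / X * M = 2^(r - m) * P"
    proof -
      have "X powr s = X * X powr (s - 1)" using Xp by (simp add: powr_mult_base)
      then show ?thesis unfolding M_def P_def using Xp by (simp add: field_simps)
    qed
    have t1': "2^(r - m) * P \<le> 2^r * (P * Fac s \<beta> X)"
    proof -
      have "(2::real)^(r - m) \<le> 2^r" by (rule power_increasing) auto
      moreover have "P \<le> P * Fac s \<beta> X" using P0 F1 by (simp add: mult_le_cancel_left1)
      ultimately show ?thesis using P0 by (meson mult_mono order_trans zero_le_power zero_le_numeral mult_nonneg_nonneg less_imp_le F1 order.trans zero_le_one)
    qed
    have t2: "R * \<beta> * X powr (s - 1) * Fac s \<beta> X = 2^r * (P * Fac s \<beta> X)"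
      by (simp add: R_def P_def)
    have "\<beta> / X * M + R * \<beta> * X powr (s - 1) * Fac s \<beta> X \<le> 2^(r+1) * (P * Fac s \<beta> X)"
    proof -
      have "(2::real)^(r+1) * (P * Fac s \<beta> X) = 2^r * (P * Fac s \<beta> X) + 2^r * (P * Fac s \<beta> X)" by simp
      then show ?thesis using t1 t1' t2 by linarith
    qed
    then have "C0 * (\<beta> / X * M + R * \<beta> * X powr (s - 1) * Fac s \<beta> X) \<le> C0 * (2^(r+1) * (P * Fac s \<beta> X))"
      using C0 by (rule mult_left_mono)
    also have "\<dots> = C * K * G s (norm \<delta>) (norm h)"
      using False unfolding C_def P_def G_def \<beta>_def X_def by (simp add: ac_simps)
    finally show ?thesis using CL1 lhs by simp
  qed
  then show ?thesis using Cpos by blast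
qed




lemma Sr_dilate:
  assumes g: "goodf s K f" and tau: "0 < \<tau>" and ne: "norm e \<le> 1" and s0: "0 \<le> s"
  shows "\<bar>fd (nat \<lfloor>s\<rfloor> + 1) \<tau> (\<lambda>t. sdiff_pow r (t *\<^sub>R e) f z) t0\<bar> \<le> 2^r * (K * real r powr s) * \<tau> powr s"
proof -
  define m where "m = nat \<lfloor>s\<rfloor> + 1"
  define F where "F = (\<lambda>t \<sigma>. f (z + t *\<^sub>R ((\<sigma> - real r / 2) *\<^sub>R e)))"
  have w: "(\<lambda>t. sdiff_pow r (t *\<^sub>R e) f z) = (\<lambda>t. fd r 1 (F t) 0)"
  proof (rule ext)
    fix t
    have "(\<lambda>\<sigma>. f (z + (\<sigma> - real r / 2) *\<^sub>R (t *\<^sub>R e))) = F t"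
      by (rule ext) (simp add: F_def mult.commute)
    then show "sdiff_pow r (t *\<^sub>R e) f z = fd r 1 (F t) 0" by (simp only: sdiff_pow_fd)
  qed
  have K: "0 \<le> K" using g by (simp add: goodf_def)
  have "fd m \<tau> (\<lambda>t. fd r 1 (F t) 0) t0 = fd r 1 (\<lambda>u. fd m \<tau> (\<lambda>t. F t u) t0) 0"
    by (rule fd_commute)
  moreover have "\<bar>fd r 1 (\<lambda>u. fd m \<tau> (\<lambda>t. F t u) t0) 0\<bar> \<le> 2^r * (K * real r powr s * \<tau> powr s)"
  proof (rule fd_bound)
    fix l assume l: "l \<le> r"
    define \<sigma> where "\<sigma> = 0 + real l * 1"
    have "\<bar>fd m \<tau> (\<lambda>t. F t \<sigma>) t0\<bar> \<le> K * \<bar>\<tau>\<bar> powr s * norm ((\<sigma> - real r / 2) *\<^sub>R e) powr s"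
      using line_pure[OF g, of \<tau> z "(\<sigma> - real r / 2) *\<^sub>R e" t0] unfolding m_def F_def by simp
    also have "\<dots> \<le> K * \<tau> powr s * real r powr s"
    proof -
      have "norm ((\<sigma> - real r / 2) *\<^sub>R e) \<le> real r"
      proof -
        have "\<bar>\<sigma> - real r / 2\<bar> \<le> real r" using l by (simp add: \<sigma>_def)
        moreover have "norm ((\<sigma> - real r / 2) *\<^sub>R e) = \<bar>\<sigma> - real r / 2\<bar> * norm e" by simp
        moreover have "\<bar>\<sigma> - real r / 2\<bar> * norm e \<le> \<bar>\<sigma> - real r / 2\<bar>" using ne by (simp add: mult_left_le)
        ultimately show ?thesis by linarith
      qed
      then have "norm ((\<sigma> - real r / 2) *\<^sub>R e) powr s \<le> real r powr s" using s0 by (intro powr_mono2) auto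
      then show ?thesis using K tau by (simp add: mult_left_mono)
    qed
    finally show "\<bar>fd m \<tau> (\<lambda>t. F t (0 + real l * 1)) t0\<bar> \<le> K * real r powr s * \<tau> powr s"
      unfolding \<sigma>_def by (simp add: ac_simps)
  qed
  ultimately show ?thesis unfolding w m_def by (simp add: mult.assoc)
qed

lemma le_mult_ge1: "0 \<le> (a::real) \<Longrightarrow> 1 \<le> b \<Longrightarrow> a \<le> a * b"
  using mult_left_mono[of 1 b a] by simp

lemma YL:
  fixes s :: real and r :: nat
  assumes s1: "1 \<le> s" and rm: "nat \<lfloor>s\<rfloor> + 1 \<le> r"
  shows "\<exists>C\<ge>0. \<forall>K (f::'a::real_normed_vector \<Rightarrow> real) z e y1 y2. goodf s K f \<longrightarrow> norm e = 1 \<longrightarrow> 0 < y1 \<longrightarrow> y1 \<le> y2 \<longrightarrow>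
     \<bar>sdiff_pow r (y2 *\<^sub>R e) f z - sdiff_pow r (y1 *\<^sub>R e) f z\<bar> \<le> C * K * G s (y2 - y1) y2"
proof -
  define m where "m = nat \<lfloor>s\<rfloor> + 1"
  define L where "L = real (m*m+m)"
  have L2: "2 \<le> L"
  proof -
    have "1 \<le> m" by (simp add: m_def)
    then have "1 \<le> m*m" by simp
    then have "2 \<le> m*m+m" using \<open>1 \<le> m\<close> by linarith
    then show ?thesis unfolding L_def by (metis of_nat_le_iff of_nat_numeral)
  qed
  obtain C0 where C0: "C0 \<ge> 0" and CA: "\<And>w X \<beta> M R t0. 0 < \<beta> \<Longrightarrow> \<beta> \<le> X \<Longrightarrow> 0 \<le> M \<Longrightarrow> 0 \<le> R \<Longrightarrow>
     (\<forall>t. t0 \<le> t \<and> t \<le> t0 + L * X \<longrightarrow> \<bar>w t\<bar> \<le> M) \<Longrightarrow>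
     (\<forall>t \<tau>. 0 < \<tau> \<and> \<tau> \<le> X \<longrightarrow> \<bar>fd m \<tau> w t\<bar> \<le> R * \<tau> powr s) \<Longrightarrow>
     \<bar>w (t0 + \<beta>) - w t0\<bar> \<le> C0 * (\<beta> / X * M + R * \<beta> * X powr (s - 1) * Fac s \<beta> X)"
    using CL_app[OF s1] unfolding m_def L_def by blast
  define cA where "cA = C0 * (L * 2^(r - m) * 2 powr s + 2^r * real r powr s)"
  define cB where "cB = 2^(r - m) * 2 * (L + 1)"
  have cA0: "0 \<le> cA" using C0 L2 by (simp add: cA_def)
  have cB0: "0 \<le> cB" using L2 by (simp add: cB_def)
  have "\<bar>sdiff_pow r (y2 *\<^sub>R e) f z - sdiff_pow r (y1 *\<^sub>R e) f z\<bar> \<le> (cA + cB) * K * G s (y2 - y1) y2"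
    if g: "goodf s K f" and ne: "norm e = 1" and y1: "0 < y1" and y12: "y1 \<le> y2"
    for K and f :: "'a \<Rightarrow> real" and z e y1 y2
  proof (cases "y1 = y2")
    case True then show ?thesis by (simp add: G_def)
  next
    case False
    define \<epsilon> where "\<epsilon> = y2 - y1"
    have ep: "0 < \<epsilon>" using False y12 by (simp add: \<epsilon>_def)
    have y2p: "0 < y2" using y1 y12 by simp
    have K: "0 \<le> K" using g by (simp add: goodf_def)
    define w where "w = (\<lambda>t. sdiff_pow r (t *\<^sub>R e) f z)"
    have wb: "\<bar>w t\<bar> \<le> 2^(r - m) * (K * \<bar>t\<bar> powr s)" for t
      using Sr_bound[OF g rm, of "t *\<^sub>R e" z] ne unfolding w_def m_def by simp
    define P where "P = K * \<epsilon> * y2 powr (s - 1) * Fac s \<epsilon> y2"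
    have F1: "1 \<le> Fac s \<epsilon> y2" using Fac_ge1[OF ep] y2p by simp
    have P0: "0 \<le> P" using K ep F1 by (simp add: P_def)
    have PG: "P = K * G s (y2 - y1) y2" using ep unfolding P_def G_def \<epsilon>_def by simp
    have y2s: "y2 powr s = y2 * y2 powr (s - 1)" using y2p by (simp add: powr_mult_base)
    have "\<bar>w y2 - w y1\<bar> \<le> cA * P \<or> \<bar>w y2 - w y1\<bar> \<le> cB * P"
    proof (cases "\<epsilon> \<le> y1 / L")
      case True
      define X where "X = y1 / L"
      define M where "M = 2^(r - m) * (K * (2 * y1) powr s)"
      define R where "R = 2^r * (K * real r powr s)"
      have Xp: "0 < X" using y1 L2 by (simp add: X_def)
      have M0: "0 \<le> M" using K by (simp add: M_def)
      have R0: "0 \<le> R" using K by (simp add: R_def)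
      have LX: "L * X = y1" using L2 by (simp add: X_def)
      have H1: "\<forall>t. y1 \<le> t \<and> t \<le> y1 + L * X \<longrightarrow> \<bar>w t\<bar> \<le> M"
      proof (intro allI impI)
        fix t assume t: "y1 \<le> t \<and> t \<le> y1 + L * X"
        have "\<bar>t\<bar> powr s \<le> (2 * y1) powr s" using t y1 s1 LX by (intro powr_mono2) auto
        then have "K * \<bar>t\<bar> powr s \<le> K * (2 * y1) powr s" using K by (rule mult_left_mono)
        then have "2^(r - m) * (K * \<bar>t\<bar> powr s) \<le> 2^(r - m) * (K * (2 * y1) powr s)"
          by (rule mult_left_mono) auto
        then show "\<bar>w t\<bar> \<le> M" using wb[of t] unfolding M_def by linarith
      qed
      have H2: "\<forall>t \<tau>. 0 < \<tau> \<and> \<tau> \<le> X \<longrightarrow> \<bar>fd m \<tau> w t\<bar> \<le> R * \<tau> powr s"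
      proof (intro allI impI)
        fix t \<tau> assume "0 < \<tau> \<and> \<tau> \<le> X"
        then show "\<bar>fd m \<tau> w t\<bar> \<le> R * \<tau> powr s"
          using Sr_dilate[OF g _ _ , of \<tau> e r z t] ne s1 unfolding w_def m_def R_def by simp
      qed
      have CL1: "\<bar>w (y1 + \<epsilon>) - w y1\<bar> \<le> C0 * (\<epsilon> / X * M + R * \<epsilon> * X powr (s - 1) * Fac s \<epsilon> X)"
        using CA[OF ep _ M0 R0 H1 H2] True unfolding X_def by blast
      have XY: "X \<le> y2"
      proof -
        have "y1 / L \<le> y1 / 1" using y1 L2 by (intro divide_left_mono) auto
        then show ?thesis using y12 unfolding X_def by simp
      qed
      have a1: "\<epsilon> / X * M \<le> L * 2^(r - m) * 2 powr s * P"
      proof -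
        have "(2 * y1) powr s = 2 powr s * (y1 * y1 powr (s - 1))" using y1 by (simp add: powr_mult powr_mult_base)
        then have "\<epsilon> / X * M = L * 2^(r - m) * 2 powr s * (K * \<epsilon> * y1 powr (s - 1))"
          unfolding M_def X_def using y1 L2 by (simp add: field_simps)
        also have "\<dots> \<le> L * 2^(r - m) * 2 powr s * P"
        proof (rule mult_left_mono)
          have "y1 powr (s - 1) \<le> y2 powr (s - 1)" using y1 y12 s1 by (intro powr_mono2) auto
          then have "K * \<epsilon> * y1 powr (s - 1) \<le> K * \<epsilon> * y2 powr (s - 1)" using K ep by (simp add: mult_left_mono)
          also have "\<dots> \<le> K * \<epsilon> * y2 powr (s - 1) * Fac s \<epsilon> y2" using K ep F1 by (intro le_mult_ge1) auto
          finally show "K * \<epsilon> * y1 powr (s - 1) \<le> P" unfolding P_def .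
        qed (use L2 in simp)
        finally show ?thesis .
      qed
      have a2: "R * \<epsilon> * X powr (s - 1) * Fac s \<epsilon> X \<le> 2^r * real r powr s * P"
      proof -
        have "X powr (s - 1) \<le> y2 powr (s - 1)" using Xp XY s1 by (intro powr_mono2) auto
        moreover have "Fac s \<epsilon> X \<le> Fac s \<epsilon> y2" using Fac_mono[OF ep _ XY] Xp by simp
        moreover have "0 \<le> Fac s \<epsilon> X" using Fac_ge1[OF ep, of X s] Xp by simp
        ultimately have "X powr (s - 1) * Fac s \<epsilon> X \<le> y2 powr (s - 1) * Fac s \<epsilon> y2"
          by (intro mult_mono) auto
        then have "(R * \<epsilon>) * (X powr (s - 1) * Fac s \<epsilon> X) \<le> (R * \<epsilon>) * (y2 powr (s - 1) * Fac s \<epsilon> y2)"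
          using R0 ep by (intro mult_left_mono) auto
        then show ?thesis unfolding R_def P_def by (simp add: ac_simps)
      qed
      have "\<bar>w y2 - w y1\<bar> \<le> C0 * (L * 2^(r - m) * 2 powr s * P + 2^r * real r powr s * P)"
      proof -
        have "w (y1 + \<epsilon>) = w y2" by (simp add: \<epsilon>_def)
        moreover have "C0 * (\<epsilon> / X * M + R * \<epsilon> * X powr (s - 1) * Fac s \<epsilon> X) \<le> C0 * (L * 2^(r - m) * 2 powr s * P + 2^r * real r powr s * P)"
          using a1 a2 C0 by (intro mult_left_mono) auto
        ultimately show ?thesis using CL1 by simp
      qed
      also have "\<dots> = cA * P" by (simp add: cA_def algebra_simps)
      finally show ?thesis by simp
    next
      case False
      have "\<bar>w y2 - w y1\<bar> \<le> \<bar>w y2\<bar> + \<bar>w y1\<bar>" by simp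
      also have "\<dots> \<le> 2^(r - m) * (K * y2 powr s) + 2^(r - m) * (K * y2 powr s)"
      proof -
        have "\<bar>y1\<bar> powr s \<le> y2 powr s" using y1 y12 s1 by (intro powr_mono2) auto
        then have "K * \<bar>y1\<bar> powr s \<le> K * y2 powr s" using K by (rule mult_left_mono)
        then have "2^(r - m) * (K * \<bar>y1\<bar> powr s) \<le> 2^(r - m) * (K * y2 powr s)" by (rule mult_left_mono) auto
        moreover have "\<bar>y2\<bar> = y2" using y2p by simp
        ultimately show ?thesis using wb[of y1] wb[of y2] by linarith
      qed
      also have "\<dots> = 2^(r - m) * 2 * (K * y2 * y2 powr (s - 1))" using y2s by simp
      also have "\<dots> \<le> 2^(r - m) * 2 * ((L + 1) * P)"
      proof (rule mult_left_mono)
        have "y1 < L * \<epsilon>" using False L2 by (simp add: field_simps)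
        then have "y2 \<le> (L + 1) * \<epsilon>" by (simp add: \<epsilon>_def algebra_simps)
        then have "K * y2 * y2 powr (s - 1) \<le> K * ((L + 1) * \<epsilon>) * y2 powr (s - 1)"
          using K by (intro mult_right_mono mult_left_mono) auto
        also have "\<dots> \<le> K * ((L + 1) * \<epsilon>) * y2 powr (s - 1) * Fac s \<epsilon> y2"
          using K ep F1 L2 by (intro le_mult_ge1) auto
        also have "\<dots> = (L + 1) * P" by (simp add: P_def ac_simps)
        finally show "K * y2 * y2 powr (s - 1) \<le> (L + 1) * P" .
      qed simp
      also have "\<dots> = cB * P" by (simp add: cB_def ac_simps)
      finally show ?thesis by simp
    qed
    moreover have "cA * P \<le> (cA + cB) * P" using cB0 P0 by (intro mult_right_mono) auto
    moreover have "cB * P \<le> (cA + cB) * P" using cA0 P0 by (intro mult_right_mono) auto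
    ultimately have "\<bar>w y2 - w y1\<bar> \<le> (cA + cB) * P" by linarith
    then show ?thesis unfolding PG w_def by (simp add: mult.assoc)
  qed
  then show ?thesis using cA0 cB0 by (intro exI[of _ "cA + cB"]) auto
qed




lemma sdiff_pow_bound:
  assumes "\<And>x. \<bar>f x\<bar> \<le> B"
  shows "\<bar>sdiff_pow k h f x\<bar> \<le> 2^k * B"
  unfolding sdiff_pow_fd by (rule fd_bound) (use assms in auto)

lemma sphere_ne: "0 \<le> y \<Longrightarrow> {h::real^'n. norm h = y} \<noteq> {}"
  using vector_choose_size[of y] by blast

lemma Delta_bdd:
  assumes "\<And>x. \<bar>f x\<bar> \<le> B"
  shows "bdd_above ((\<lambda>h. \<bar>sdiff_pow k h f x\<bar>) ` {h. norm h = y})"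
  using sdiff_pow_bound[OF assms] by (intro bdd_aboveI2) auto

lemma Delta_upper:
  assumes "\<And>x. \<bar>f x\<bar> \<le> B" and "norm h = y"
  shows "\<bar>sdiff_pow k h f x\<bar> \<le> Delta_k k f x y"
  unfolding Delta_k_def using assms by (intro cSUP_upper Delta_bdd) auto

lemma Delta_nonneg:
  fixes f :: "real^'n \<Rightarrow> real"
  assumes "\<And>x. \<bar>f x\<bar> \<le> B" and "0 \<le> y"
  shows "0 \<le> Delta_k k f x y"
proof -
  obtain h :: "real^'n" where "norm h = y" using vector_choose_size[OF assms(2)] by blast
  then have "\<bar>sdiff_pow k h f x\<bar> \<le> Delta_k k f x y" by (intro Delta_upper[OF assms(1)])
  then show ?thesis by linarith
qed

lemma sdiff_pow_zero: "sdiff_pow (Suc k) 0 f x = 0"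
  unfolding sdiff_pow_fd by (simp add: fd_const)

lemma Lambda_good:
  fixes f :: "real^'n \<Rightarrow> real"
  assumes fL: "f \<in> Lambda_space s" and s0: "0 < s"
  defines "A \<equiv> Sup (holder_seminorm_set s f)" and "B \<equiv> (SUP x. \<bar>f x\<bar>)"
  shows "0 \<le> A" "0 \<le> B" "Lambda_norm s f = B + A"
    "goodf s (A + 2^(nat \<lfloor>s\<rfloor> + 1) * B) f"
proof -
  define m where "m = nat \<lfloor>s\<rfloor> + 1"
  from fL have bd: "bounded (range f)" and bA: "bdd_above (holder_seminorm_set s f)"
    unfolding Lambda_space_def by auto
  obtain a where a: "\<And>x. \<bar>f x\<bar> \<le> a" using bd unfolding bounded_iff by auto
  have bB: "bdd_above (range (\<lambda>x. \<bar>f x\<bar>))" using a by (intro bdd_aboveI2) auto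
  have fB: "\<bar>f x\<bar> \<le> B" for x unfolding B_def by (rule cSUP_upper[OF _ bB]) auto
  show B0: "0 \<le> B" using fB[of 0] by linarith
  have mem: "Delta_k m f x y / y powr s \<in> holder_seminorm_set s f" if "0 < y" "y \<le> 1" for x y
    unfolding holder_seminorm_set_def m_def using that by blast
  have hA: "Delta_k m f x y / y powr s \<le> A" if "0 < y" "y \<le> 1" for x y
    unfolding A_def by (rule cSup_upper[OF mem[OF that] bA])
  show A0: "0 \<le> A"
  proof -
    have "0 \<le> Delta_k m f 0 1" by (rule Delta_nonneg[OF fB]) simp
    then show ?thesis using hA[of 1 0] by simp
  qed
  show "Lambda_norm s f = B + A" unfolding Lambda_norm_def A_def B_def ..
  define K where "K = A + 2^m * B"
  have pure: "\<bar>sdiff_pow m v f p\<bar> \<le> K * norm v powr s" for v p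
  proof (cases "v = 0")
    case True then show ?thesis by (simp del: sdiff_pow.simps add: m_def sdiff_pow_zero)
  next
    case False
    show ?thesis
    proof (cases "norm v \<le> 1")
      case True
      have nv: "0 < norm v" using False by simp
      have "\<bar>sdiff_pow m v f p\<bar> \<le> Delta_k m f p (norm v)" by (rule Delta_upper[OF fB]) simp
      also have "\<dots> \<le> A * norm v powr s"
        using hA[OF nv True, of p] nv by (simp add: divide_le_eq)
      also have "\<dots> \<le> K * norm v powr s" using B0 by (simp add: K_def mult_right_mono)
      finally show ?thesis .
    next
      case False
      have "\<bar>sdiff_pow m v f p\<bar> \<le> 2^m * B" by (rule sdiff_pow_bound[OF fB])
      also have "\<dots> \<le> 2^m * B * norm v powr s"
      proof -
        have "1 \<le> norm v powr s" using False s0 by (intro ge_one_powr_ge_zero) auto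
        then show ?thesis using B0 by (simp add: le_mult_ge1)
      qed
      also have "\<dots> \<le> K * norm v powr s" using A0 by (simp add: K_def mult_right_mono)
      finally show ?thesis .
    qed
  qed
  have line: "fd m 1 (\<lambda>t. f (p + t *\<^sub>R v)) 0 = sdiff_pow m v f (p + (real m / 2) *\<^sub>R v)" for p v
  proof -
    have "(\<lambda>t. f (p + (real m / 2) *\<^sub>R v + (t - real m / 2) *\<^sub>R v)) = (\<lambda>t. f (p + t *\<^sub>R v))"
      by (rule ext) (simp add: algebra_simps scaleR_diff_left)
    then show ?thesis by (simp only: sdiff_pow_fd)
  qed
  have K0: "0 \<le> K" using A0 B0 by (simp add: K_def)
  have fK: "\<bar>f x\<bar> \<le> K" for x
  proof -
    have "B \<le> 2^m * B" using B0 by (simp add: le_mult_ge1 mult.commute[of "2^m"])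
    then show ?thesis using fB[of x] A0 by (simp add: K_def)
  qed
  show "goodf s (A + 2^(nat \<lfloor>s\<rfloor> + 1) * B) f"
    unfolding goodf_def K_def[symmetric, unfolded m_def] using K0 fK pure line unfolding m_def by auto
qed




lemma holder_small:
  assumes g: "goodf s K f" and s: "0 < s" "s < 1"
  shows "\<bar>f a - f b\<bar> \<le> K * norm (a - b) powr s"
proof -
  have "nat \<lfloor>s\<rfloor> = 0" using s by (simp add: floor_eq_iff)
  then have "\<forall>p v. \<bar>fd 1 1 (\<lambda>t. f (p + t *\<^sub>R v)) 0\<bar> \<le> K * norm v powr s"
    using g unfolding goodf_def by (simp del: fd.simps)
  then have "\<bar>fd 1 1 (\<lambda>t. f (b + t *\<^sub>R (a - b))) 0\<bar> \<le> K * norm (a - b) powr s" by blast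
  then show ?thesis by simp
qed

lemma small_pw:
  fixes f :: "'a::real_normed_vector \<Rightarrow> real"
  assumes g: "goodf s K f" and s: "0 < s" "s < 1"
  shows "\<bar>sdiff_pow r h f x - sdiff_pow r h' f x'\<bar> \<le> 2^r * (K * (norm (x - x') + real r * norm (h - h')) powr s)"
proof -
  have "sdiff_pow r h f x - sdiff_pow r h' f x' =
     fd r 1 (\<lambda>\<sigma>. f (x + (\<sigma> - real r / 2) *\<^sub>R h) - f (x' + (\<sigma> - real r / 2) *\<^sub>R h')) 0"
    by (simp only: sdiff_pow_fd fd_diff)
  also have "\<bar>\<dots>\<bar> \<le> 2^r * (K * (norm (x - x') + real r * norm (h - h')) powr s)"
  proof (rule fd_bound)
    fix l assume l: "l \<le> r"
    define \<sigma> where "\<sigma> = 0 + real l * 1"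
    have e: "(x + (\<sigma> - real r / 2) *\<^sub>R h) - (x' + (\<sigma> - real r / 2) *\<^sub>R h') = (x - x') + (\<sigma> - real r / 2) *\<^sub>R (h - h')"
      by (simp add: algebra_simps)
    have "norm ((x - x') + (\<sigma> - real r / 2) *\<^sub>R (h - h')) \<le> norm (x - x') + \<bar>\<sigma> - real r / 2\<bar> * norm (h - h')"
      using norm_triangle_ineq[of "x - x'" "(\<sigma> - real r / 2) *\<^sub>R (h - h')"] by simp
    also have "\<dots> \<le> norm (x - x') + real r * norm (h - h')"
    proof -
      have "\<bar>\<sigma> - real r / 2\<bar> \<le> real r" using l by (simp add: \<sigma>_def)
      then show ?thesis by (simp add: mult_right_mono)
    qed
    finally have n: "norm ((x + (\<sigma> - real r / 2) *\<^sub>R h) - (x' + (\<sigma> - real r / 2) *\<^sub>R h')) \<le> norm (x - x') + real r * norm (h - h')"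
      unfolding e .
    have K: "0 \<le> K" using g by (simp add: goodf_def)
    have "\<bar>f (x + (\<sigma> - real r / 2) *\<^sub>R h) - f (x' + (\<sigma> - real r / 2) *\<^sub>R h')\<bar>
        \<le> K * norm ((x + (\<sigma> - real r / 2) *\<^sub>R h) - (x' + (\<sigma> - real r / 2) *\<^sub>R h')) powr s"
      by (rule holder_small[OF g s])
    also have "\<dots> \<le> K * (norm (x - x') + real r * norm (h - h')) powr s"
      using n s K by (intro mult_left_mono powr_mono2) auto
    finally show "\<bar>f (x + (0 + real l * 1 - real r / 2) *\<^sub>R h) - f (x' + (0 + real l * 1 - real r / 2) *\<^sub>R h')\<bar>
        \<le> K * (norm (x - x') + real r * norm (h - h')) powr s" unfolding \<sigma>_def .
  qed
  finally show ?thesis .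
qed

lemma powr_sum_le:
  fixes a b c s :: real
  assumes "0 \<le> a" "0 \<le> b" "0 \<le> c" "0 < s"
  shows "(a + c * b) powr s \<le> (1 + c) powr s * (a powr s + b powr s)"
proof -
  define M where "M = max a b"
  have aM: "a \<le> M" and bM: "b \<le> M" unfolding M_def by auto
  have "c * b \<le> c * M" using bM assms by (intro mult_left_mono) auto
  then have "a + c * b \<le> (1 + c) * M" using aM by (simp add: algebra_simps)
  then have "(a + c * b) powr s \<le> ((1 + c) * M) powr s" using assms by (intro powr_mono2) auto
  also have "\<dots> = (1 + c) powr s * M powr s" using assms by (simp add: powr_mult M_def)
  also have "M powr s \<le> a powr s + b powr s" unfolding M_def by (cases "a \<le> b") (auto simp: max_def)
  then have "(1 + c) powr s * M powr s \<le> (1 + c) powr s * (a powr s + b powr s)" by (simp add: mult_left_mono)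
  finally show ?thesis .
qed

lemma G_nonneg: "0 \<le> d \<Longrightarrow> 0 < Y \<Longrightarrow> 0 \<le> G s d Y"
  unfolding G_def using Fac_ge1[of d Y s] by auto

lemma G_mod:
  assumes s1: "1 \<le> s" and y: "0 < y" "0 < y'" and dx: "0 \<le> dx"
  shows "G s dx (max y y') + G s \<bar>y - y'\<bar> (max y y') \<le> modulus_bound s dx y y'"
proof -
  define Y where "Y = max y y'"
  have Yp: "0 < Y" using y by (simp add: Y_def)
  have YS: "Y \<le> y + y'" using y by (simp add: Y_def)
  show ?thesis
  proof (cases "s = 1")
    case True
    have one: "G 1 d Y \<le> tlog d (y + y')" if "0 \<le> d" for d
    proof (cases "d = 0")
      case True then show ?thesis by (simp add: G_def tlog_def)
    next
      case False
      then have dp: "0 < d" using that by simp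
      have "ln (exp 1 + Y / d) \<le> ln (exp 1 + (y + y') / d)"
      proof (rule ln_mono)
        show "exp 1 + Y / d \<le> exp 1 + (y + y') / d" using YS dp by (simp add: divide_right_mono)
        show "0 < exp 1 + Y / d" using Yp dp by (simp add: add_pos_nonneg)
      qed
      then show ?thesis using False dp Yp by (simp add: G_def tlog_def Fac_def mult_left_mono)
    qed
    show ?thesis using one[OF dx] one[of "\<bar>y - y'\<bar>"] True unfolding Y_def modulus_bound_def Let_def by simp
  next
    case False
    then have s1': "1 < s" using s1 by simp
    have one: "G s d Y \<le> d * (y + y') powr (s - 1)" if "0 \<le> d" for d
    proof -
      have "Y powr (s - 1) \<le> (y + y') powr (s - 1)" using Yp YS s1 by (intro powr_mono2) auto
      then show ?thesis using that False by (simp add: G_def Fac_def mult_left_mono)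
    qed
    have "G s dx Y + G s \<bar>y - y'\<bar> Y \<le> dx * (y + y') powr (s - 1) + \<bar>y - y'\<bar> * (y + y') powr (s - 1)"
      using one[OF dx] one[of "\<bar>y - y'\<bar>"] by simp
    also have "\<dots> = modulus_bound s dx y y'"
      using s1' by (simp add: modulus_bound_def Let_def algebra_simps)
    finally show ?thesis unfolding Y_def .
  qed
qed

lemma mod_nonneg: "0 < y \<Longrightarrow> 0 < y' \<Longrightarrow> 0 \<le> dx \<Longrightarrow> 0 \<le> modulus_bound s dx y y'"
proof -
  assume a: "0 < y" "0 < y'" "0 \<le> dx"
  have t: "0 \<le> tlog d (y + y')" if "0 \<le> d" for d
  proof (cases "d = 0")
    case False
    then have "0 < d" using that by simp
    then have "1 \<le> ln (exp 1 + (y + y') / d)" using a Fac_ge1[of d "y + y'" 1]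
      by (simp add: Fac_def)
    then show ?thesis using that by (simp add: tlog_def)
  qed (simp add: tlog_def)
  show ?thesis unfolding modulus_bound_def Let_def using a t[of dx] t[of "\<bar>y - y'\<bar>"] by auto
qed

lemma mod_sym: "modulus_bound s dx y y' = modulus_bound s dx y' y"
  unfolding modulus_bound_def Let_def by (simp add: abs_minus_commute add.commute)




lemma Delta_compare:
  fixes f :: "real^'n \<Rightarrow> real"
  assumes fb: "\<And>x. \<bar>f x\<bar> \<le> B" and y: "0 < y" "0 < y'"
    and PB: "\<And>h. norm h = y \<Longrightarrow> \<bar>sdiff_pow r h f x - sdiff_pow r ((y'/y) *\<^sub>R h) f x'\<bar> \<le> E"
  shows "Delta_k r f x y \<le> Delta_k r f x' y' + E"
proof -
  have "Delta_k r f x y = (SUP h\<in>{h. norm h = y}. \<bar>sdiff_pow r h f x\<bar>)" by (simp add: Delta_k_def)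
  also have "\<dots> \<le> Delta_k r f x' y' + E"
  proof (rule cSUP_least)
    obtain h0 :: "real^'n" where "norm h0 = y" using vector_choose_size[of y] y by auto
    then show "{h::real^'n. norm h = y} \<noteq> {}" by blast
    fix h :: "real^'n" assume "h \<in> {h. norm h = y}"
    then have nh: "norm h = y" by simp
    have "norm ((y'/y) *\<^sub>R h) = y'" using nh y by simp
    then have "\<bar>sdiff_pow r ((y'/y) *\<^sub>R h) f x'\<bar> \<le> Delta_k r f x' y'" by (rule Delta_upper[OF fb])
    with PB[OF nh] show "\<bar>sdiff_pow r h f x\<bar> \<le> Delta_k r f x' y' + E" by linarith
  qed
  finally show ?thesis .
qed

lemma pw_big:
  fixes f :: "'a::real_normed_vector \<Rightarrow> real"
  assumes KLc: "\<forall>K (f::'a \<Rightarrow> real) z \<delta> h. goodf s K f \<longrightarrow> norm \<delta> \<le> norm h \<longrightarrow>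
     \<bar>sdiff_pow r h f (z + \<delta>) - sdiff_pow r h f z\<bar> \<le> C1 * K * G s (norm \<delta>) (norm h)"
    and YLc: "\<forall>K (f::'a \<Rightarrow> real) z e y1 y2. goodf s K f \<longrightarrow> norm e = 1 \<longrightarrow> 0 < y1 \<longrightarrow> y1 \<le> y2 \<longrightarrow>
     \<bar>sdiff_pow r (y2 *\<^sub>R e) f z - sdiff_pow r (y1 *\<^sub>R e) f z\<bar> \<le> C2 * K * G s (y2 - y1) y2"
    and C: "0 \<le> C1" "0 \<le> C2" and g: "goodf s K f"
    and y: "0 < y" "0 < y'" and dx: "dist x x' \<le> max y y'" and nh: "norm h = y"
  shows "\<bar>sdiff_pow r h f x - sdiff_pow r ((y'/y) *\<^sub>R h) f x'\<bar>
     \<le> (C1 + C2) * K * (G s (dist x x') (max y y') + G s \<bar>y - y'\<bar> (max y y'))"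
proof -
  define e where "e = (1/y) *\<^sub>R h"
  have ne: "norm e = 1" using nh y by (simp add: e_def)
  have he: "h = y *\<^sub>R e" using y by (simp add: e_def)
  have h'e: "(y'/y) *\<^sub>R h = y' *\<^sub>R e" using y by (simp add: e_def)
  have K: "0 \<le> K" using g by (simp add: goodf_def)
  define Gx where "Gx = G s (dist x x') (max y y')"
  define Gy where "Gy = G s \<bar>y - y'\<bar> (max y y')"
  have Gx0: "0 \<le> Gx" unfolding Gx_def using y by (intro G_nonneg) auto
  have Gy0: "0 \<le> Gy" unfolding Gy_def using y by (intro G_nonneg) auto
  have xx: "x' + (x - x') = x" by simp
  have dn: "norm (x - x') = dist x x'" by (simp add: dist_norm)
  have "\<bar>sdiff_pow r (y *\<^sub>R e) f x - sdiff_pow r (y' *\<^sub>R e) f x'\<bar> \<le> C1 * K * Gx + C2 * K * Gy"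
  proof (cases "y' \<le> y")
    case True
    have a: "\<bar>sdiff_pow r (y *\<^sub>R e) f x - sdiff_pow r (y *\<^sub>R e) f x'\<bar> \<le> C1 * K * Gx"
    proof -
      have n': "norm (y *\<^sub>R e) = y" using ne y by simp
      have "norm (x - x') \<le> norm (y *\<^sub>R e)" using dx True n' dn by simp
      then have "\<bar>sdiff_pow r (y *\<^sub>R e) f (x' + (x - x')) - sdiff_pow r (y *\<^sub>R e) f x'\<bar>
          \<le> C1 * K * G s (norm (x - x')) (norm (y *\<^sub>R e))" using KLc g by blast
      moreover have "max y y' = y" using True by simp
      ultimately show ?thesis unfolding Gx_def xx n' dn by simp
    qed
    have b: "\<bar>sdiff_pow r (y *\<^sub>R e) f x' - sdiff_pow r (y' *\<^sub>R e) f x'\<bar> \<le> C2 * K * Gy"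
    proof -
      have "Gy = G s (y - y') y" using True unfolding Gy_def by (simp add: max_def)
      then show ?thesis using YLc g ne y True by simp
    qed
    show ?thesis using a b by linarith
  next
    case False
    have b: "\<bar>sdiff_pow r (y *\<^sub>R e) f x - sdiff_pow r (y' *\<^sub>R e) f x\<bar> \<le> C2 * K * Gy"
    proof -
      have "Gy = G s (y' - y) y'" using False unfolding Gy_def by (simp add: max_def)
      then have "\<bar>sdiff_pow r (y' *\<^sub>R e) f x - sdiff_pow r (y *\<^sub>R e) f x\<bar> \<le> C2 * K * Gy"
        using YLc g ne y False by simp
      then show ?thesis by (simp add: abs_minus_commute)
    qed
    have a: "\<bar>sdiff_pow r (y' *\<^sub>R e) f x - sdiff_pow r (y' *\<^sub>R e) f x'\<bar> \<le> C1 * K * Gx"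
    proof -
      have n': "norm (y' *\<^sub>R e) = y'" using ne y by simp
      have "norm (x - x') \<le> norm (y' *\<^sub>R e)" using dx False n' dn by simp
      then have "\<bar>sdiff_pow r (y' *\<^sub>R e) f (x' + (x - x')) - sdiff_pow r (y' *\<^sub>R e) f x'\<bar>
          \<le> C1 * K * G s (norm (x - x')) (norm (y' *\<^sub>R e))" using KLc g by blast
      moreover have "max y y' = y'" using False by simp
      ultimately show ?thesis unfolding Gx_def xx n' dn by simp
    qed
    show ?thesis using a b by linarith
  qed
  also have "\<dots> \<le> (C1 + C2) * K * (Gx + Gy)"
  proof -
    have "C1 * K * Gx \<le> (C1 + C2) * K * Gx" using C K Gx0 by (intro mult_right_mono) auto
    moreover have "C2 * K * Gy \<le> (C1 + C2) * K * Gy" using C K Gy0 by (intro mult_right_mono) auto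
    ultimately show ?thesis by (simp add: algebra_simps)
  qed
  finally have X: "\<bar>sdiff_pow r (y *\<^sub>R e) f x - sdiff_pow r (y' *\<^sub>R e) f x'\<bar> \<le> (C1 + C2) * K * (Gx + Gy)" .
  show ?thesis unfolding h'e using X he unfolding Gx_def Gy_def by simp
qed




theorem mainTheorem5:
  fixes s :: real and r :: nat
  assumes "0 < s" and "real r > s"
  shows "\<exists>C. \<forall>f \<in> (Lambda_space s :: (real^'n \<Rightarrow> real) set). \<forall>x x' :: real^'n. \<forall>y y' :: real.
           0 < y \<and> y \<le> 1 \<and> 0 < y' \<and> y' \<le> 1 \<and> (s \<ge> 1 \<longrightarrow> dist x x' \<le> max y y') \<longrightarrow>
           \<bar>Delta_k r f x y - Delta_k r f x' y'\<bar>
             \<le> C * Lambda_norm s f * modulus_bound s (dist x x') y y'"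
proof -
  define m where "m = nat \<lfloor>s\<rfloor> + 1"
  have key: "\<exists>C'\<ge>0. \<forall>K (f::real^'n \<Rightarrow> real) x x' y y'. goodf s K f \<longrightarrow> 0 < y \<longrightarrow> 0 < y' \<longrightarrow>
     (s \<ge> 1 \<longrightarrow> dist x x' \<le> max y y') \<longrightarrow>
     (\<forall>h. norm h = y \<longrightarrow> \<bar>sdiff_pow r h f x - sdiff_pow r ((y'/y) *\<^sub>R h) f x'\<bar>
          \<le> C' * K * modulus_bound s (dist x x') y y')"
  proof (cases "1 \<le> s")
    case True
    have "\<lfloor>s\<rfloor> < int r" using assms(2) by (simp add: floor_less_iff)
    moreover have "0 \<le> \<lfloor>s\<rfloor>" using True by simp
    ultimately have rm: "nat \<lfloor>s\<rfloor> + 1 \<le> r" by linarith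
    obtain C1 where C1: "0 \<le> C1" and KLc: "\<forall>K (f::real^'n \<Rightarrow> real) z \<delta> h. goodf s K f \<longrightarrow> norm \<delta> \<le> norm h \<longrightarrow>
     \<bar>sdiff_pow r h f (z + \<delta>) - sdiff_pow r h f z\<bar> \<le> C1 * K * G s (norm \<delta>) (norm h)"
      using KL[OF True rm, where 'a = "real^'n"] by blast
    obtain C2 where C2: "0 \<le> C2" and YLc: "\<forall>K (f::real^'n \<Rightarrow> real) z e y1 y2. goodf s K f \<longrightarrow> norm e = 1 \<longrightarrow> 0 < y1 \<longrightarrow> y1 \<le> y2 \<longrightarrow>
     \<bar>sdiff_pow r (y2 *\<^sub>R e) f z - sdiff_pow r (y1 *\<^sub>R e) f z\<bar> \<le> C2 * K * G s (y2 - y1) y2"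
      using YL[OF True rm, where 'a = "real^'n"] by blast
    have "\<bar>sdiff_pow r h f x - sdiff_pow r ((y'/y) *\<^sub>R h) f x'\<bar> \<le> (C1 + C2) * K * modulus_bound s (dist x x') y y'"
      if g: "goodf s K f" and y: "0 < y" "0 < y'" and dx: "dist x x' \<le> max y y'" and nh: "norm h = y"
      for K and f :: "real^'n \<Rightarrow> real" and x x' y y' and h :: "real^'n"
    proof -
      have K: "0 \<le> K" using g by (simp add: goodf_def)
      have "\<bar>sdiff_pow r h f x - sdiff_pow r ((y'/y) *\<^sub>R h) f x'\<bar>
         \<le> (C1 + C2) * K * (G s (dist x x') (max y y') + G s \<bar>y - y'\<bar> (max y y'))"
        by (rule pw_big[OF KLc YLc C1 C2 g y dx nh])
      also have "\<dots> \<le> (C1 + C2) * K * modulus_bound s (dist x x') y y'"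
        using G_mod[OF True y, of "dist x x'"] C1 C2 K by (intro mult_left_mono) auto
      finally show ?thesis .
    qed
    then show ?thesis using C1 C2 True by (intro exI[of _ "C1 + C2"]) auto
  next
    case False
    then have s1: "s < 1" by simp
    define C' where "C' = 2^r * (1 + real r) powr s"
    have "\<bar>sdiff_pow r h f x - sdiff_pow r ((y'/y) *\<^sub>R h) f x'\<bar> \<le> C' * K * modulus_bound s (dist x x') y y'"
      if g: "goodf s K f" and y: "0 < y" "0 < y'" and nh: "norm h = y"
      for K and f :: "real^'n \<Rightarrow> real" and x x' y y' and h :: "real^'n"
    proof -
      have K: "0 \<le> K" using g by (simp add: goodf_def)
      have nd: "norm (h - (y'/y) *\<^sub>R h) = \<bar>y - y'\<bar>"
      proof -
        have "h - (y'/y) *\<^sub>R h = (1 - y'/y) *\<^sub>R h" by (simp add: algebra_simps)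
        then have "norm (h - (y'/y) *\<^sub>R h) = \<bar>1 - y'/y\<bar> * y" using nh by simp
        also have "\<dots> = \<bar>y - y'\<bar>" using y by (simp add: abs_mult[symmetric] field_simps)
        finally show ?thesis .
      qed
      have "\<bar>sdiff_pow r h f x - sdiff_pow r ((y'/y) *\<^sub>R h) f x'\<bar>
          \<le> 2^r * (K * (norm (x - x') + real r * norm (h - (y'/y) *\<^sub>R h)) powr s)"
        by (rule small_pw[OF g assms(1) s1])
      also have "\<dots> = 2^r * (K * (dist x x' + real r * \<bar>y - y'\<bar>) powr s)" by (simp add: nd dist_norm)
      also have "\<dots> \<le> 2^r * (K * ((1 + real r) powr s * (dist x x' powr s + \<bar>y - y'\<bar> powr s)))"
        using powr_sum_le[of "dist x x'" "\<bar>y - y'\<bar>" "real r" s] assms(1) K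
        by (intro mult_left_mono) auto
      also have "\<dots> = C' * K * modulus_bound s (dist x x') y y'"
        using s1 by (simp add: C'_def modulus_bound_def Let_def)
      finally show ?thesis .
    qed
    moreover have "0 \<le> C'" by (simp add: C'_def)
    ultimately show ?thesis by (intro exI[of _ C']) auto
  qed
  then obtain C' where C'0: "0 \<le> C'" and key': "\<And>K (f::real^'n \<Rightarrow> real) x x' y y' h. goodf s K f \<Longrightarrow> 0 < y \<Longrightarrow> 0 < y' \<Longrightarrow>
     (s \<ge> 1 \<longrightarrow> dist x x' \<le> max y y') \<Longrightarrow> norm h = y \<Longrightarrow>
     \<bar>sdiff_pow r h f x - sdiff_pow r ((y'/y) *\<^sub>R h) f x'\<bar> \<le> C' * K * modulus_bound s (dist x x') y y'"
    by blast
  show ?thesis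
  proof (intro exI[of _ "C' * 2^m"] ballI allI impI)
    fix f :: "real^'n \<Rightarrow> real" and x x' :: "real^'n" and y y' :: real
    assume fL: "f \<in> Lambda_space s"
      and hyp: "0 < y \<and> y \<le> 1 \<and> 0 < y' \<and> y' \<le> 1 \<and> (s \<ge> 1 \<longrightarrow> dist x x' \<le> max y y')"
    define A where "A = Sup (holder_seminorm_set s f)"
    define B where "B = (SUP x. \<bar>f x\<bar>)"
    note LG = Lambda_good[OF fL assms(1), folded A_def B_def]
    define K where "K = A + 2^m * B"
    have g: "goodf s K f" using LG(4) unfolding K_def m_def .
    have fK: "\<And>z. \<bar>f z\<bar> \<le> K" using g by (simp add: goodf_def)
    have y: "0 < y" "0 < y'" using hyp by auto
    have dx1: "s \<ge> 1 \<longrightarrow> dist x x' \<le> max y y'" using hyp by auto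
    have dx2: "s \<ge> 1 \<longrightarrow> dist x' x \<le> max y' y" using dx1 by (simp add: dist_commute max.commute)
    define E where "E = C' * K * modulus_bound s (dist x x') y y'"
    have E2: "C' * K * modulus_bound s (dist x' x) y' y = E"
      unfolding E_def by (simp add: dist_commute mod_sym[of s _ y y'])
    have D1: "Delta_k r f x y \<le> Delta_k r f x' y' + E"
      by (rule Delta_compare[OF fK y]) (use key'[OF g y dx1] E_def in auto)
    have D2: "Delta_k r f x' y' \<le> Delta_k r f x y + E"
      by (rule Delta_compare[OF fK y(2) y(1)]) (use key'[OF g y(2) y(1) dx2] E2 in auto)
    have "\<bar>Delta_k r f x y - Delta_k r f x' y'\<bar> \<le> E" using D1 D2 by linarith
    also have "E \<le> C' * 2^m * Lambda_norm s f * modulus_bound s (dist x x') y y'"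
    proof -
      have M0: "0 \<le> modulus_bound s (dist x x') y y'" using y by (intro mod_nonneg) auto
      have "K \<le> 2^m * (B + A)"
      proof -
        have "A \<le> 2^m * A" using LG(1) by (simp add: le_mult_ge1 mult.commute[of "2^m"])
        then show ?thesis by (simp add: K_def algebra_simps)
      qed
      then have "C' * K * modulus_bound s (dist x x') y y' \<le> C' * (2^m * (B + A)) * modulus_bound s (dist x x') y y'"
        using C'0 M0 by (intro mult_right_mono mult_left_mono) auto
      then show ?thesis unfolding E_def LG(3) by (simp add: ac_simps)
    qed
    finally show "\<bar>Delta_k r f x y - Delta_k r f x' y'\<bar> \<le> C' * 2^m * Lambda_norm s f * modulus_bound s (dist x x') y y'" .
  qed
qed


end
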